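(* Let $\Omega\subset\mathbb R^n$ be a bounded Lipschitz domain, $G$ a compact matrix Lie group with Lie algebra $\mathfrak g$, and let $A(t)\in\Lambda^1(\overline\Omega,\mathfrak g)$ and $\phi(t)\in\Lambda^0(\overline\Omega,\mathfrak g)$ be smooth, smoothly time-dependent $\mathfrak g$-valued forms. Put $E=-(\dot A+d_A\phi)$, $B=F_A$, $D=\epsilon E$, $H=\mu^{-1}B$, where $\epsilon,\mu^{-1}$ are smooth, time-independent symmetric isomorphisms as in the context. Suppose that $$\dot D-[\phi,D]=d_AH,\qquad d_AD=\rho .$$ Then $\rho$ satisfies $\dot\rho=[\phi,\rho]$. In particular, $|\rho|$ is conserved, i.e. at each point of $\overline\Omega$ the quantity $|\rho|$, defined by $|\rho|^2\,d\mathrm{vol}=\langle\rho\wedge *\rho\rangle$ with $*$ the Hodge star, is independent of $t$.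
   Context: $G$ is a compact Lie group realized as a group of unitary matrices; its Lie algebra $\mathfrak g$ consists of skew-Hermitian matrices with bracket $[\xi,\eta]=\xi\eta-\eta\xi$ and invariant inner product $\langle\xi,\eta\rangle=\operatorname{tr}(\xi^*\eta)$ (so $\langle[\xi,\eta],\omega\rangle+\langle\eta,[\xi,\omega]\rangle=0$). $\Lambda^k(\overline\Omega,\mathfrak g)$ denotes sections of $\bigwedge^kT^*\overline\Omega\otimes\mathfrak g$. For $u=\alpha\otimes\xi$, $v=\beta\otimes\eta$ (real forms $\alpha,\beta$, constant $\xi,\eta\in\mathfrak g$) define $du=d\alpha\otimes\xi$, $[u\wedge v]=(\alpha\wedge\beta)\otimes[\xi,\eta]$, $\langle u\wedge v\rangle=(\alpha\wedge\beta)\langle\xi,\eta\rangle$ (a real form), extended bilinearly; when one argument is a $0$-form one writes $[\cdot,\cdot]$, $\langle\cdot,\cdot\rangle$. For $A\in\Lambda^1(\overline\Omega,\mathfrak g)$, the curvature is $F_A=dA+\tfrac12[A\wedge A]$ and the exterior covariant derivative is $d_Au=du+[A\wedge u]$. The permittivity $\epsilon$ and inverse permeability $\mu^{-1}$ are pointwise isomorphisms $\epsilon_x:\bigwedge^1T_x^*\overline\Omega\to\bigwedge^{n-1}T_x^*\overline\Omega$, $\mu^{-1}_x:\bigwedge^2T_x^*\overline\Omega\to\bigwedge^{n-2}T_x^*\overline\Omega$ that are symmetric in the sense $\alpha\wedge\epsilon\beta=\beta\wedge\epsilon\alpha$ for real $1$-forms and $\alpha\wedge\mu^{-1}\beta=\beta\wedge\mu^{-1}\alpha$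 for real $2$-forms; they act on $\mathfrak g$-valued forms by acting on the form factor, $\epsilon(\alpha\otimes\xi)=\epsilon\alpha\otimes\xi$. Dots denote time derivatives. *)

theory Defs
  imports "HOL-Analysis.Analysis"
begin

fun Ck :: "nat \<Rightarrow> ('a::euclidean_space \<Rightarrow> 'b::real_normed_vector) \<Rightarrow> bool" where
  "Ck 0 f = continuous_on UNIV f"
| "Ck (Suc k) f = (f differentiable_on UNIV \<and>
       (\<forall>v. Ck k (\<lambda>x. frechet_derivative f (at x) v)))"

definition smooth_fun :: "('a::euclidean_space \<Rightarrow> 'b::real_normed_vector) \<Rightarrow> bool" where
  "smooth_fun f \<longleftrightarrow> (\<forall>k. Ck k f)"

definition lipschitz_boundary :: "((real, 'n::finite) vec) set \<Rightarrow> bool" where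
  "lipschitz_boundary \<Omega> \<longleftrightarrow>
    (\<forall>p\<in>frontier \<Omega>. \<exists>e r L h. norm e = 1 \<and> r > 0 \<and>
        L-lipschitz_on {y. y \<bullet> e = 0} h \<and>
        \<Omega> \<inter> ball p r = {x \<in> ball p r. (x - p) \<bullet> e < h ((x - p) - ((x - p) \<bullet> e) *\<^sub>R e)})"

definition bounded_lipschitz_domain :: "((real, 'n::finite) vec) set \<Rightarrow> bool" where
  "bounded_lipschitz_domain \<Omega> \<longleftrightarrow>
     open \<Omega> \<and> connected \<Omega> \<and> \<Omega> \<noteq> {} \<and> bounded \<Omega> \<and> lipschitz_boundary \<Omega>"

definition madj :: "complex^'m^'m \<Rightarrow> complex^'m^'m" where
  "madj a = (\<chi> i j. cnj (a $ j $ i))"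

definition mtrace :: "complex^'m^'m \<Rightarrow> complex" where
  "mtrace a = (\<Sum>i\<in>UNIV. a $ i $ i)"

definition unitary_mat :: "complex^'m^'m \<Rightarrow> bool" where
  "unitary_mat u \<longleftrightarrow> madj u ** u = mat 1 \<and> u ** madj u = mat 1"

text \<open>A compact matrix Lie group realized as a group of unitary matrices.\<close>
definition compact_unitary_group :: "(complex^'m^'m) set \<Rightarrow> bool" where
  "compact_unitary_group G \<longleftrightarrow>
     (\<forall>u\<in>G. unitary_mat u) \<and> mat 1 \<in> G \<and>
     (\<forall>u\<in>G. \<forall>v\<in>G. u ** v \<in> G) \<and> (\<forall>u\<in>G. madj u \<in> G) \<and> compact G"

definition lie_algebra :: "(complex^'m^'m) set \<Rightarrow> (complex^'m^'m) set" where
  "lie_algebra G = {v. \<exists>\<gamma>. \<gamma> 0 = mat 1 \<and> (\<forall>s. \<gamma> s \<in> G) \<and>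
                          (\<gamma> has_vector_derivative v) (at 0)}"

definition lbr_mat :: "complex^'m^'m \<Rightarrow> complex^'m^'m \<Rightarrow> complex^'m^'m" where
  "lbr_mat a b = a ** b - b ** a"

definition ip_mat :: "complex^'m^'m \<Rightarrow> complex^'m^'m \<Rightarrow> real" where
  "ip_mat a b = Re (mtrace (madj a ** b))"

text \<open>A (possibly inhomogeneous) form at a point is a function from index sets
  I \<subseteq> {1..n} (ordered increasingly) to coefficients: the coefficient of
  dx_{i1} \<and> ... \<and> dx_{ik}, i1 < ... < ik, I = {i1..ik}.\<close>

definition perm_sign :: "'n::linorder set \<Rightarrow> 'n set \<Rightarrow> real" where
  "perm_sign J K = (-1) ^ card {(a, b). a \<in> J \<and> b \<in> K \<and> b < a}"

definition wedge_with :: "('a \<Rightarrow> 'b \<Rightarrow> 'c::real_vector) \<Rightarrow>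
    ('n::{finite,linorder} set \<Rightarrow> 'a) \<Rightarrow> ('n set \<Rightarrow> 'b) \<Rightarrow> 'n set \<Rightarrow> 'c" where
  "wedge_with f u v I = (\<Sum>J\<in>Pow I. perm_sign J (I - J) *\<^sub>R f (u J) (v (I - J)))"

definition homog :: "(nat \<Rightarrow> bool) \<Rightarrow> ('n set \<Rightarrow> 'c::zero) \<Rightarrow> bool" where
  "homog P \<alpha> \<longleftrightarrow> (\<forall>I. \<not> P (card I) \<longrightarrow> \<alpha> I = 0)"

text \<open>Time-dependent g-valued forms on R^n (fields): coefficient, point x, time t.\<close>
type_synonym ('n, 'm) field = "'n set \<Rightarrow> (real, 'n) vec \<Rightarrow> real \<Rightarrow> complex^'m^'m"

definition pd :: "'n::finite \<Rightarrow> ((real, 'n) vec \<Rightarrow> real \<Rightarrow> 'c::real_normed_vector) \<Rightarrow> (real, 'n) vec \<Rightarrow> real \<Rightarrow> 'c" where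
  "pd i f x t = vector_derivative (\<lambda>s. f (x + s *\<^sub>R axis i 1) t) (at 0)"

definition tderiv :: "('n, 'm::finite) field \<Rightarrow> ('n, 'm) field" where
  "tderiv u = (\<lambda>I x t. vector_derivative (\<lambda>s. u I x s) (at t))"

definition dext :: "('n::{finite,linorder}, 'm::finite) field \<Rightarrow> ('n, 'm) field" where
  "dext u = (\<lambda>I x t. \<Sum>i\<in>I. (-1) ^ card {j\<in>I. j < i} *\<^sub>R pd i (u (I - {i})) x t)"

definition lbr :: "('n::{finite,linorder}, 'm::finite) field \<Rightarrow> ('n, 'm) field \<Rightarrow> ('n, 'm) field" where
  "lbr u v = (\<lambda>I x t. wedge_with lbr_mat (\<lambda>K. u K x t) (\<lambda>K. v K x t) I)"

definition ipw :: "('n::{finite,linorder}, 'm::finite) field \<Rightarrow> ('n, 'm) field \<Rightarrow>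
    'n set \<Rightarrow> (real, 'n) vec \<Rightarrow> real \<Rightarrow> real" where
  "ipw u v = (\<lambda>I x t. wedge_with ip_mat (\<lambda>K. u K x t) (\<lambda>K. v K x t) I)"

definition cov_d :: "('n::{finite,linorder}, 'm::finite) field \<Rightarrow> ('n, 'm) field \<Rightarrow> ('n, 'm) field" where
  "cov_d A u = (\<lambda>I x t. dext u I x t + lbr A u I x t)"

definition curvature :: "('n::{finite,linorder}, 'm::finite) field \<Rightarrow> ('n, 'm) field" where
  "curvature A = (\<lambda>I x t. dext A I x t + (1/2) *\<^sub>R lbr A A I x t)"

definition op_pt :: "((real, 'n::finite) vec \<Rightarrow> 'n set \<Rightarrow> 'n set \<Rightarrow> real) \<Rightarrow> (real, 'n) vec \<Rightarrow>
    ('n set \<Rightarrow> real) \<Rightarrow> 'n set \<Rightarrow> real" where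
  "op_pt c x \<alpha> = (\<lambda>J. \<Sum>I\<in>UNIV. c x J I * \<alpha> I)"

definition op_field :: "((real, 'n::finite) vec \<Rightarrow> 'n set \<Rightarrow> 'n set \<Rightarrow> real) \<Rightarrow>
    ('n, 'm::finite) field \<Rightarrow> ('n, 'm) field" where
  "op_field c u = (\<lambda>J x t. \<Sum>I\<in>UNIV. c x J I *\<^sub>R u I x t)"

definition sym_iso_field :: "nat \<Rightarrow> ((real, 'n::{finite,linorder}) vec) set \<Rightarrow>
    ((real, 'n) vec \<Rightarrow> 'n set \<Rightarrow> 'n set \<Rightarrow> real) \<Rightarrow> bool" where
  "sym_iso_field k S c \<longleftrightarrow>
     (\<forall>J I. smooth_fun (\<lambda>x. c x J I)) \<and>
     (\<forall>x J I. c x J I \<noteq> 0 \<longrightarrow> card I = k \<and> card J + k = CARD('n)) \<and>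
     (\<forall>x\<in>S. bij_betw (op_pt c x) {\<alpha>. homog (\<lambda>j. j = k) \<alpha>}
                                  {\<beta>. homog (\<lambda>j. j + k = CARD('n)) \<beta>}) \<and>
     (\<forall>x\<in>S. \<forall>\<alpha> \<beta>. homog (\<lambda>j. j = k) \<alpha> \<longrightarrow> homog (\<lambda>j. j = k) \<beta> \<longrightarrow>
         wedge_with (*) \<alpha> (op_pt c x \<beta>) = wedge_with (*) \<beta> (op_pt c x \<alpha>))"

definition hodge :: "('n::{finite,linorder}, 'm::finite) field \<Rightarrow> ('n, 'm) field" where
  "hodge u = (\<lambda>J x t. perm_sign (- J) J *\<^sub>R u (- J) x t)"

text \<open>|\<rho>|, defined by |\<rho>|^2 dvol = <\<rho> \<and> *\<rho>>; dvol = dx_1 \<and> ... \<and> dx_n.\<close>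
definition fnorm :: "('n::{finite,linorder}, 'm::finite) field \<Rightarrow> (real, 'n) vec \<Rightarrow> real \<Rightarrow> real" where
  "fnorm \<rho> x t = sqrt (ipw \<rho> (hodge \<rho>) UNIV x t)"

definition smooth_field :: "('n::finite, 'm::finite) field \<Rightarrow> bool" where
  "smooth_field u \<longleftrightarrow> (\<forall>I. smooth_fun (\<lambda>(x, t). u I x t))"

end

theory Submission
  imports Defs
begin

lemma Ck_mono: "Ck (Suc k) f \<Longrightarrow> Ck k f"
proof (induction k arbitrary: f)
  case 0
  then show ?case by (simp add: differentiable_imp_continuous_on)
next
  case (Suc k)
  then show ?case by simp
qed

lemma Ck_le: "Ck k f \<Longrightarrow> j \<le> k \<Longrightarrow> Ck j f"
proof (induction k)
  case (Suc k)
  then show ?case by (metis Ck_mono le_Suc_eq)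
qed simp

lemma Ck_const: "Ck k (\<lambda>x. c)"
  by (induction k arbitrary: c) auto

lemma Ck_add: "Ck k f \<Longrightarrow> Ck k g \<Longrightarrow> Ck k (\<lambda>x. f x + g x)"
proof (induction k arbitrary: f g)
  case 0
  then show ?case by (auto intro: continuous_on_add)
next
  case (Suc k)
  have df: "f differentiable at x" and dg: "g differentiable at x" for x
    using Suc.prems by (auto simp: differentiable_on_def)
  have fd: "frechet_derivative (\<lambda>x. f x + g x) (at x) v =
     frechet_derivative f (at x) v + frechet_derivative g (at x) v" for x v
  proof -
    have "((\<lambda>x. f x + g x) has_derivative (\<lambda>h. frechet_derivative f (at x) h + frechet_derivative g (at x) h)) (at x)"
      using df dg by (intro has_derivative_add) (auto simp: frechet_derivative_works)
    from frechet_derivative_at[OF this] show ?thesis by metis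
  qed
  show ?case using Suc by (auto simp: fd differentiable_on_def intro!: differentiable_add)
qed

lemma Ck_bilinear:
  fixes prod :: "'b::real_normed_vector \<Rightarrow> 'c::real_normed_vector \<Rightarrow> 'd::real_normed_vector"
    and f :: "'a::euclidean_space \<Rightarrow> 'b" and g :: "'a \<Rightarrow> 'c"
  assumes "bounded_bilinear prod"
  shows "Ck k f \<Longrightarrow> Ck k g \<Longrightarrow> Ck k (\<lambda>x. prod (f x) (g x))"
proof (induction k arbitrary: f g)
  case 0
  then show ?case using bounded_bilinear.continuous_on[OF assms] by auto
next
  case (Suc k)
  have df: "f differentiable at x" and dg: "g differentiable at x" for x
    using Suc.prems by (auto simp: differentiable_on_def)
  have hd: "((\<lambda>x. prod (f x) (g x)) has_derivative (\<lambda>h. prod (f x) (frechet_derivative g (at x) h) + prod (frechet_derivative f (at x) h) (g x))) (at x)" for x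
      using df dg by (intro bounded_bilinear.FDERIV[OF assms]) (auto simp: frechet_derivative_works)
  have fd: "frechet_derivative (\<lambda>x. prod (f x) (g x)) (at x) v =
     prod (f x) (frechet_derivative g (at x) v) + prod (frechet_derivative f (at x) v) (g x)" for x v
    using frechet_derivative_at[OF hd[of x]] by metis
  have diff: "(\<lambda>x. prod (f x) (g x)) differentiable at x" for x
    using hd by (rule differentiableI)
  have fk: "Ck k f" and gk: "Ck k g" using Suc.prems Ck_mono by blast+
  have f1: "Ck k (\<lambda>x. frechet_derivative f (at x) v)" and g1: "Ck k (\<lambda>x. frechet_derivative g (at x) v)" for v
    using Suc.prems by auto
  have "Ck k (\<lambda>x. prod (f x) (frechet_derivative g (at x) v) + prod (frechet_derivative f (at x) v) (g x))" for v
    by (rule Ck_add; rule Suc.IH) (use fk gk f1 g1 in auto)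
  then show ?case
    by (simp add: fd differentiable_on_def diff)
qed

lemma Ck_linear_comp:
  fixes L :: "'c::euclidean_space \<Rightarrow> 'a::euclidean_space"
  assumes L: "bounded_linear L"
  shows "Ck k f \<Longrightarrow> Ck k (\<lambda>x. f (L x))"
proof (induction k arbitrary: f)
  case 0
  then show ?case
    by (auto intro!: continuous_on_compose2[OF _ linear_continuous_on[OF L]])
next
  case (Suc k)
  have df: "f differentiable at x" for x
    using Suc.prems by (auto simp: differentiable_on_def)
  have hd: "((\<lambda>x. f (L x)) has_derivative (\<lambda>h. frechet_derivative f (at (L x)) (L h))) (at x)" for x
  proof -
    have "(f has_derivative frechet_derivative f (at (L x))) (at (L x))"
      using df[of "L x"] by (simp add: frechet_derivative_works)
    from diff_chain_at[OF bounded_linear_imp_has_derivative[OF L] this]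
    show ?thesis by (simp add: o_def)
  qed
  have fd: "frechet_derivative (\<lambda>x. f (L x)) (at x) v = frechet_derivative f (at (L x)) (L v)" for x v
    using frechet_derivative_at[OF hd[of x]] by metis
  have diff: "(\<lambda>x. f (L x)) differentiable at x" for x
    using hd by (rule differentiableI)
  have "Ck k (\<lambda>x. frechet_derivative f (at (L x)) (L v))" for v
    by (rule Suc.IH) (use Suc.prems in auto)
  then show ?case
    by (simp add: fd differentiable_on_def diff)
qed

lemma Ck_sum: "finite S \<Longrightarrow> (\<And>i. i \<in> S \<Longrightarrow> Ck k (f i)) \<Longrightarrow> Ck k (\<lambda>x. \<Sum>i\<in>S. f i x)"
proof (induction S rule: finite_induct)
  case empty
  then show ?case by (simp add: Ck_const)
next
  case (insert a S)
  then show ?case by (simp add: Ck_add)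
qed


lemma line_deriv:
  assumes "g differentiable at (p + s *\<^sub>R w)"
  shows "((\<lambda>s. g (p + s *\<^sub>R w)) has_vector_derivative frechet_derivative g (at (p + s *\<^sub>R w)) w) (at s within S)"
proof -
  have l: "((\<lambda>s. p + s *\<^sub>R w) has_derivative (\<lambda>h. h *\<^sub>R w)) (at s within S)"
    by (auto intro!: derivative_eq_intros)
  have g: "(g has_derivative frechet_derivative g (at (p + s *\<^sub>R w))) (at (p + s *\<^sub>R w) within (\<lambda>s. p + s *\<^sub>R w) ` S)"
    using assms frechet_derivative_works has_derivative_at_withinI by blast
  have lin: "linear (frechet_derivative g (at (p + s *\<^sub>R w)))"
    using assms by (rule linear_frechet_derivative)
  from diff_chain_within[OF l g] show ?thesis
    unfolding has_vector_derivative_def o_def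
    by (rule has_derivative_eq_rhs) (simp add: linear_scale[OF lin])
qed

lemma line_deriv0:
  assumes "g differentiable at p"
  shows "((\<lambda>s. g (p + s *\<^sub>R w)) has_vector_derivative frechet_derivative g (at p) w) (at 0 within S)"
  using line_deriv[of g p 0 w S] assms by simp

lemma schwarz:
  fixes f :: "'a::euclidean_space \<Rightarrow> 'b::euclidean_space"
  assumes C2: "Ck 2 f"
  shows "frechet_derivative (\<lambda>p. frechet_derivative f (at p) v) (at x) w =
         frechet_derivative (\<lambda>p. frechet_derivative f (at p) w) (at x) v"
proof -
  define Df where "Df u = (\<lambda>p. frechet_derivative f (at p) u)" for u
  define DD where "DD u w = (\<lambda>p. frechet_derivative (Df u) (at p) w)" for u w
  have fdiff: "f differentiable at p" for p
    using C2 by (simp add: numeral_2_eq_2 differentiable_on_def)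
  have Dfdiff: "Df u differentiable at p" for u p
    using C2 by (simp add: numeral_2_eq_2 differentiable_on_def Df_def)
  have DDcont: "continuous_on UNIV (DD u w)" for u w
    using C2 by (simp add: numeral_2_eq_2 DD_def Df_def)
  have Dfcont: "continuous_on UNIV (Df u)" for u
    by (simp add: differentiable_imp_continuous_on differentiable_on_def Dfdiff)
  have step1: "((\<lambda>s. Df w (p + s *\<^sub>R w)) has_integral (f (p + a *\<^sub>R w) - f p)) {0..a}"
    if "0 \<le> a" for p a
  proof -
    have "((\<lambda>s. frechet_derivative f (at (p + s *\<^sub>R w)) w) has_integral (f (p + a *\<^sub>R w) - f (p + 0 *\<^sub>R w))) {0..a}" 
      by (rule fundamental_theorem_of_calculus[OF that]) (rule line_deriv[OF fdiff])
    then show ?thesis by (simp add: Df_def)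
  qed
  have step2: "Df v (x + a *\<^sub>R w) - Df v x = integral {0..a} (\<lambda>s. DD w v (x + s *\<^sub>R w))"
    if a: "0 \<le> a" for a
  proof -
    have eq: "integral (cbox 0 a) (\<lambda>s. Df w (x + s *\<^sub>R w + b *\<^sub>R v)) =
        f (x + a *\<^sub>R w + b *\<^sub>R v) - f (x + b *\<^sub>R v)" for b
      using integral_unique[OF step1[OF a, of "x + b *\<^sub>R v"]] by (simp add: add_ac)
    have d1: "((\<lambda>b. integral (cbox 0 a) (\<lambda>s. Df w (x + s *\<^sub>R w + b *\<^sub>R v))) has_vector_derivative
        integral (cbox 0 a) (\<lambda>s. DD w v (x + s *\<^sub>R w + 0 *\<^sub>R v))) (at 0 within UNIV)"
    proof (rule leibniz_rule_vector_derivative)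
      show "((\<lambda>b. Df w (x + s *\<^sub>R w + b *\<^sub>R v)) has_vector_derivative DD w v (x + s *\<^sub>R w + b *\<^sub>R v)) (at b within UNIV)"
        for b s unfolding DD_def by (rule line_deriv[OF Dfdiff])
      show "(\<lambda>s. Df w (x + s *\<^sub>R w + b *\<^sub>R v)) integrable_on cbox 0 a" for b
        by (rule integrable_continuous)
          (rule continuous_on_compose2[OF Dfcont], auto intro!: continuous_intros)
      show "continuous_on (UNIV \<times> cbox 0 a) (\<lambda>(b, s). DD w v (x + s *\<^sub>R w + b *\<^sub>R v))"
        unfolding split_beta by (rule continuous_on_compose2[OF DDcont]) (auto intro!: continuous_intros)
    qed auto
    have d2: "((\<lambda>b. f (x + a *\<^sub>R w + b *\<^sub>R v) - f (x + b *\<^sub>R v)) has_vector_derivative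
        Df v (x + a *\<^sub>R w) - Df v x) (at 0 within UNIV)"
      unfolding Df_def by (intro has_vector_derivative_diff line_deriv0 fdiff)
    have "Df v (x + a *\<^sub>R w) - Df v x = integral (cbox 0 a) (\<lambda>s. DD w v (x + s *\<^sub>R w + 0 *\<^sub>R v))"
      using vector_derivative_unique_at[OF d2 d1[unfolded eq]] by simp
    then show ?thesis by simp
  qed
  have hc: "continuous_on {0..1} (\<lambda>s. DD w v (x + s *\<^sub>R w))"
    by (rule continuous_on_compose2[OF DDcont]) (auto intro!: continuous_intros)
  have G: "((\<lambda>a. Df v x + integral {0..a} (\<lambda>s. DD w v (x + s *\<^sub>R w))) has_vector_derivative
      DD w v (x + 0 *\<^sub>R w)) (at 0 within {0..1})"
    using has_vector_derivative_add[OF has_vector_derivative_const integral_has_vector_derivative[OF hc, of 0]] by simp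
  have F: "((\<lambda>a. Df v (x + a *\<^sub>R w)) has_vector_derivative DD v w x) (at 0 within {0..1})"
    unfolding DD_def by (rule line_deriv0[OF Dfdiff])
  have F': "((\<lambda>a. Df v x + integral {0..a} (\<lambda>s. DD w v (x + s *\<^sub>R w))) has_vector_derivative DD v w x) (at 0 within {0..1})"
    by (rule has_vector_derivative_transform[OF _ _ F]) (auto simp: step2[symmetric])
  have "DD v w x = DD w v x"
    using vector_derivative_unique_within_closed_interval[of 0 1 0, unfolded cbox_interval, OF _ _ F' G] by simp
  then show ?thesis by (simp add: DD_def Df_def)
qed


section \<open>Reindexing lemmas\<close>

lemma notin_Diff_single: "a \<notin> b \<Longrightarrow> b - {a} = b" by blast

lemma sum_pairs1:
  fixes I :: "'n::finite set"
  shows "(\<Sum>i\<in>I. \<Sum>J\<in>Pow (I - {i}). g i J) = (\<Sum>M\<in>Pow I. \<Sum>i\<in>M. g i (M - {i}))"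
proof -
  have "(\<Sum>i\<in>I. \<Sum>J\<in>Pow (I - {i}). g i J) = (\<Sum>(i,J)\<in>Sigma I (\<lambda>i. Pow (I - {i})). g i J)"
    by (rule sum.Sigma) auto
  also have "\<dots> = (\<Sum>(M,i)\<in>Sigma (Pow I) (\<lambda>M. M). g i (M - {i}))"
    by (rule sum.reindex_bij_witness[where i="\<lambda>(M,i). (i, M - {i})" and j="\<lambda>(i,J). (insert i J, i)"])
       (auto simp: insert_absorb subset_Diff_insert notin_Diff_single)
  also have "\<dots> = (\<Sum>M\<in>Pow I. \<Sum>i\<in>M. g i (M - {i}))"
    by (rule sum.Sigma[symmetric]) auto
  finally show ?thesis .
qed

lemma sum_pairs2:
  fixes I :: "'n::finite set"
  shows "(\<Sum>i\<in>I. \<Sum>J\<in>Pow (I - {i}). g i J) = (\<Sum>J\<in>Pow I. \<Sum>i\<in>I - J. g i J)"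
proof -
  have "(\<Sum>i\<in>I. \<Sum>J\<in>Pow (I - {i}). g i J) = (\<Sum>(i,J)\<in>Sigma I (\<lambda>i. Pow (I - {i})). g i J)"
    by (rule sum.Sigma) auto
  also have "\<dots> = (\<Sum>(J,i)\<in>Sigma (Pow I) (\<lambda>J. I - J). g i J)"
    by (rule sum.reindex_bij_witness[where i="\<lambda>(J,i). (i, J)" and j="\<lambda>(i,J). (J, i)"]) auto
  also have "\<dots> = (\<Sum>J\<in>Pow I. \<Sum>i\<in>I - J. g i J)"
    by (rule sum.Sigma[symmetric]) auto
  finally show ?thesis .
qed

lemma sum_pairs3:
  fixes I :: "'n::finite set"
  shows "(\<Sum>M\<in>Pow I. \<Sum>J\<in>Pow M. g M J) = (\<Sum>J\<in>Pow I. \<Sum>K\<in>Pow (I - J). g (J \<union> K) J)"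
proof -
  have "(\<Sum>M\<in>Pow I. \<Sum>J\<in>Pow M. g M J) = (\<Sum>(M,J)\<in>Sigma (Pow I) Pow. g M J)"
    by (rule sum.Sigma) auto
  also have "\<dots> = (\<Sum>(J,K)\<in>Sigma (Pow I) (\<lambda>J. Pow (I - J)). g (J \<union> K) J)"
    by (rule sum.reindex_bij_witness[where i="\<lambda>(J,K). (J \<union> K, J)" and j="\<lambda>(M,J). (J, M - J)"]) (auto simp: Un_absorb1)
  also have "\<dots> = (\<Sum>J\<in>Pow I. \<Sum>K\<in>Pow (I - J). g (J \<union> K) J)"
    by (rule sum.Sigma[symmetric]) auto
  finally show ?thesis .
qed

lemma sum_pairs_swap:
  fixes I :: "'n::finite set"
  shows "(\<Sum>J\<in>Pow I. \<Sum>K\<in>Pow (I - J). g J K) = (\<Sum>J\<in>Pow I. \<Sum>K\<in>Pow (I - J). g K J)"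
proof -
  have "(\<Sum>J\<in>Pow I. \<Sum>K\<in>Pow (I - J). g J K) = (\<Sum>(J,K)\<in>Sigma (Pow I) (\<lambda>J. Pow (I - J)). g J K)"
    by (rule sum.Sigma) auto
  also have "\<dots> = (\<Sum>(J,K)\<in>Sigma (Pow I) (\<lambda>J. Pow (I - J)). g K J)"
    by (rule sum.reindex_bij_witness[where i="\<lambda>(J,K). (K, J)" and j="\<lambda>(J,K). (K, J)"]) auto
  also have "\<dots> = (\<Sum>J\<in>Pow I. \<Sum>K\<in>Pow (I - J). g K J)"
    by (rule sum.Sigma[symmetric]) auto
  finally show ?thesis .
qed

lemma sum_ne_swap:
  fixes I :: "'n::finite set"
  shows "(\<Sum>i\<in>I. \<Sum>j\<in>I - {i}. g i j) = (\<Sum>i\<in>I. \<Sum>j\<in>I - {i}. g j i)"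
proof -
  have "(\<Sum>i\<in>I. \<Sum>j\<in>I - {i}. g i j) = (\<Sum>(i,j)\<in>Sigma I (\<lambda>i. I - {i}). g i j)"
    by (rule sum.Sigma) auto
  also have "\<dots> = (\<Sum>(i,j)\<in>Sigma I (\<lambda>i. I - {i}). g j i)"
    by (rule sum.reindex_bij_witness[where i="\<lambda>(i,j). (j, i)" and j="\<lambda>(i,j). (j, i)"]) auto
  also have "\<dots> = (\<Sum>i\<in>I. \<Sum>j\<in>I - {i}. g j i)"
    by (rule sum.Sigma[symmetric]) auto
  finally show ?thesis .
qed

section \<open>Signs\<close>

definition cnt :: "'n::linorder set \<Rightarrow> 'n set \<Rightarrow> nat" where
  "cnt J K = card {(a, b). a \<in> J \<and> b \<in> K \<and> b < a}"

lemma ps_cnt: "perm_sign J K = (-1) ^ cnt J K"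
  by (simp add: perm_sign_def cnt_def)

lemma cnt_Un_right:
  fixes J :: "'n::{finite,linorder} set"
  assumes "K1 \<inter> K2 = {}" shows "cnt J (K1 \<union> K2) = cnt J K1 + cnt J K2"
proof -
  have "{(a, b). a \<in> J \<and> b \<in> K1 \<union> K2 \<and> b < a} = {(a, b). a \<in> J \<and> b \<in> K1 \<and> b < a} \<union> {(a, b). a \<in> J \<and> b \<in> K2 \<and> b < a}"
    by auto
  moreover have "card ({(a, b). a \<in> J \<and> b \<in> K1 \<and> b < a} \<union> {(a, b). a \<in> J \<and> b \<in> K2 \<and> b < a}) =
     card {(a, b). a \<in> J \<and> b \<in> K1 \<and> b < a} + card {(a, b). a \<in> J \<and> b \<in> K2 \<and> b < a}"
    by (rule card_Un_disjoint) (use assms in auto)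
  ultimately show ?thesis by (simp add: cnt_def)
qed

lemma cnt_Un_left:
  fixes K :: "'n::{finite,linorder} set"
  assumes "J1 \<inter> J2 = {}" shows "cnt (J1 \<union> J2) K = cnt J1 K + cnt J2 K"
proof -
  have "{(a, b). a \<in> J1 \<union> J2 \<and> b \<in> K \<and> b < a} = {(a, b). a \<in> J1 \<and> b \<in> K \<and> b < a} \<union> {(a, b). a \<in> J2 \<and> b \<in> K \<and> b < a}"
    by auto
  moreover have "card ({(a, b). a \<in> J1 \<and> b \<in> K \<and> b < a} \<union> {(a, b). a \<in> J2 \<and> b \<in> K \<and> b < a}) =
     card {(a, b). a \<in> J1 \<and> b \<in> K \<and> b < a} + card {(a, b). a \<in> J2 \<and> b \<in> K \<and> b < a}"
    by (rule card_Un_disjoint) (use assms in auto)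
  ultimately show ?thesis by (simp add: cnt_def)
qed

lemma cnt_swap:
  fixes J :: "'n::{finite,linorder} set"
  assumes "J \<inter> K = {}" shows "cnt J K + cnt K J = card J * card K"
proof -
  have e1: "{(a, b). a \<in> K \<and> b \<in> J \<and> b < a} = prod.swap ` {(a, b). a \<in> J \<and> b \<in> K \<and> a < b}"
    by (auto simp: image_def)
  have "cnt K J = card (prod.swap ` {(a, b). a \<in> J \<and> b \<in> K \<and> a < b})"
    unfolding cnt_def e1 ..
  also have "\<dots> = card {(a, b). a \<in> J \<and> b \<in> K \<and> a < b}"
    by (rule card_image) simp
  finally have 1: "cnt K J = card {(a, b). a \<in> J \<and> b \<in> K \<and> a < b}" .
  have e2: "J \<times> K = {(a, b). a \<in> J \<and> b \<in> K \<and> b < a} \<union> {(a, b). a \<in> J \<and> b \<in> K \<and> a < b}"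
    using assms by (auto simp: neq_iff)
  have "card ({(a, b). a \<in> J \<and> b \<in> K \<and> b < a} \<union> {(a, b). a \<in> J \<and> b \<in> K \<and> a < b}) = card {(a, b). a \<in> J \<and> b \<in> K \<and> b < a} + card {(a, b). a \<in> J \<and> b \<in> K \<and> a < b}"
    by (rule card_Un_disjoint) auto
  then show ?thesis using 1 e2 card_cartesian_product[of J K] by (simp add: cnt_def)
qed

lemma ps_Un_right:
  fixes J :: "'n::{finite,linorder} set"
  shows "K1 \<inter> K2 = {} \<Longrightarrow> perm_sign J (K1 \<union> K2) = perm_sign J K1 * perm_sign J K2"
  by (simp add: ps_cnt cnt_Un_right power_add)

lemma ps_Un_left:
  fixes K :: "'n::{finite,linorder} set"
  shows "J1 \<inter> J2 = {} \<Longrightarrow> perm_sign (J1 \<union> J2) K = perm_sign J1 K * perm_sign J2 K"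
  by (simp add: ps_cnt cnt_Un_left power_add)

lemma ps_swap:
  fixes J :: "'n::{finite,linorder} set"
  shows "J \<inter> K = {} \<Longrightarrow> perm_sign J K * perm_sign K J = (-1) ^ (card J * card K)"
  by (simp add: ps_cnt cnt_swap flip: power_add)

lemma ps_sq: "perm_sign J K * perm_sign J K = 1"
  by (simp add: ps_cnt flip: power_add)

lemma ps_empty [simp]: "perm_sign {} K = 1" "perm_sign J {} = 1"
  by (simp_all add: perm_sign_def)

lemma sg_ps: "(-1::real) ^ card {j\<in>I. j < i} = perm_sign {i} (I - {i})"
proof -
  have "{(a, b). a \<in> {i} \<and> b \<in> I - {i} \<and> b < a} = (\<lambda>b. (i, b)) ` {j\<in>I. j < i}"
    by auto
  then have "cnt {i} (I - {i}) = card {j\<in>I. j < i}"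
    unfolding cnt_def by (simp add: card_image inj_on_def)
  then show ?thesis by (simp add: ps_cnt)
qed

lemma sg_remove:
  fixes I :: "'n::{finite,linorder} set"
  assumes "i \<in> I" "j \<in> I" "i \<noteq> j"
  shows "perm_sign {i} (I - {i}) * perm_sign {j} (I - {i} - {j}) = - (perm_sign {j} (I - {j}) * perm_sign {i} (I - {j} - {i}))"
proof -
  have e2: "I - {i} = (I - {i} - {j}) \<union> {j}" using assms by auto
  have a0: "perm_sign {i} ((I - {i} - {j}) \<union> {j}) = perm_sign {i} (I - {i} - {j}) * perm_sign {i} {j}"
    by (rule ps_Un_right) auto
  have a: "perm_sign {i} (I - {i}) = perm_sign {i} (I - {i} - {j}) * perm_sign {i} {j}"
    using a0 by (simp only: e2[symmetric])
  have e: "I - {j} = (I - {i} - {j}) \<union> {i}" using assms by auto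
  have b0: "perm_sign {j} ((I - {i} - {j}) \<union> {i}) = perm_sign {j} (I - {i} - {j}) * perm_sign {j} {i}"
    by (rule ps_Un_right) auto
  have b: "perm_sign {j} (I - {j}) = perm_sign {j} (I - {i} - {j}) * perm_sign {j} {i}"
    using b0 by (simp only: e[symmetric])
  have c: "perm_sign {i} {j} * perm_sign {j} {i} = -1"
    using ps_swap[of "{i}" "{j}"] assms by simp
  have d: "I - {j} - {i} = I - {i} - {j}" by auto
  have c': "perm_sign {i} {j} = - perm_sign {j} {i}"
  proof -
    have "perm_sign {i} {j} = perm_sign {i} {j} * (perm_sign {j} {i} * perm_sign {j} {i})"
      by (simp add: ps_sq)
    also have "\<dots> = - perm_sign {j} {i}" using c by (simp add: mult.assoc[symmetric])
    finally show ?thesis .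
  qed
  show ?thesis
    unfolding a b d c' by (simp add: algebra_simps)
qed


abbreviation sg :: "'n::linorder \<Rightarrow> 'n set \<Rightarrow> real" where
  "sg i I \<equiv> (-1::real) ^ card {j\<in>I. j < i}"

lemma sign_W1:
  fixes I :: "'n::{finite,linorder} set"
  assumes "i \<in> M" "M \<subseteq> I"
  shows "perm_sign {i} (I - {i}) * perm_sign (M - {i}) (I - M) = perm_sign M (I - M) * perm_sign {i} (M - {i})"
proof -
  have e1: "I - {i} = (M - {i}) \<union> (I - M)" using assms by auto
  have e2: "M = (M - {i}) \<union> {i}" using assms by auto
  have a: "perm_sign {i} (I - {i}) = perm_sign {i} (M - {i}) * perm_sign {i} (I - M)"
    unfolding e1 by (rule ps_Un_right) auto
  have b0: "perm_sign ((M - {i}) \<union> {i}) (I - M) = perm_sign (M - {i}) (I - M) * perm_sign {i} (I - M)"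
    by (rule ps_Un_left) auto
  have b: "perm_sign M (I - M) = perm_sign (M - {i}) (I - M) * perm_sign {i} (I - M)"
    using b0 by (simp only: e2[symmetric])
  show ?thesis unfolding a b by (simp add: algebra_simps)
qed

lemma wedge_d_left:
  fixes I :: "'n::{finite,linorder} set"
  assumes f: "bounded_bilinear f"
  shows "(\<Sum>i\<in>I. sg i I *\<^sub>R wedge_with f (U i) v (I - {i})) =
         wedge_with f (\<lambda>J. \<Sum>i\<in>J. sg i J *\<^sub>R U i (J - {i})) v I"
proof -
  have "(\<Sum>i\<in>I. sg i I *\<^sub>R wedge_with f (U i) v (I - {i})) =
        (\<Sum>i\<in>I. \<Sum>J\<in>Pow (I - {i}). (sg i I * perm_sign J (I - {i} - J)) *\<^sub>R f (U i J) (v (I - {i} - J)))"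
    by (simp add: wedge_with_def scaleR_sum_right)
  also have "\<dots> = (\<Sum>M\<in>Pow I. \<Sum>i\<in>M. (sg i I * perm_sign (M - {i}) (I - {i} - (M - {i}))) *\<^sub>R f (U i (M - {i})) (v (I - {i} - (M - {i}))))"
    by (rule sum_pairs1)
  also have "\<dots> = (\<Sum>M\<in>Pow I. \<Sum>i\<in>M. (perm_sign M (I - M) * sg i M) *\<^sub>R f (U i (M - {i})) (v (I - M)))"
  proof (intro sum.cong refl)
    fix M i assume "M \<in> Pow I" "i \<in> M"
    then have e: "I - {i} - (M - {i}) = I - M" by auto
    show "(sg i I * perm_sign (M - {i}) (I - {i} - (M - {i}))) *\<^sub>R f (U i (M - {i})) (v (I - {i} - (M - {i}))) =
       (perm_sign M (I - M) * sg i M) *\<^sub>R f (U i (M - {i})) (v (I - M))"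
      unfolding e sg_ps using sign_W1[of i M I] \<open>M \<in> Pow I\<close> \<open>i \<in> M\<close> by simp
  qed
  also have "\<dots> = wedge_with f (\<lambda>J. \<Sum>i\<in>J. sg i J *\<^sub>R U i (J - {i})) v I"
    by (simp add: wedge_with_def bounded_bilinear.sum_left[OF f] bounded_bilinear.scaleR_left[OF f] scaleR_sum_right)
  finally show ?thesis .
qed

lemma sign_W2:
  fixes I :: "'n::{finite,linorder} set"
  assumes "i \<in> I" "J \<subseteq> I" "i \<notin> J"
  shows "perm_sign {i} (I - {i}) * perm_sign J (I - {i} - J) = (-1) ^ card J * (perm_sign J (I - J) * perm_sign {i} (I - J - {i}))"
proof -
  define L where "L = I - {i} - J"
  have e1: "I - {i} = J \<union> L" using assms by (auto simp: L_def)
  have e2: "I - J = L \<union> {i}" using assms by (auto simp: L_def)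
  have e3: "I - J - {i} = L" using assms by (auto simp: L_def)
  have a: "perm_sign {i} (I - {i}) = perm_sign {i} J * perm_sign {i} L"
    unfolding e1 by (rule ps_Un_right) (auto simp: L_def)
  have b: "perm_sign J (I - J) = perm_sign J L * perm_sign J {i}"
    unfolding e2 by (rule ps_Un_right) (auto simp: L_def)
  have c: "perm_sign {i} J * perm_sign J {i} = (-1) ^ card J"
    using ps_swap[of "{i}" J] assms by simp
  have c': "perm_sign {i} J = (-1) ^ card J * perm_sign J {i}"
  proof -
    have "perm_sign {i} J = perm_sign {i} J * (perm_sign J {i} * perm_sign J {i})"
      by (simp add: ps_sq)
    also have "\<dots> = (-1) ^ card J * perm_sign J {i}" using c by (simp add: mult.assoc[symmetric])
    finally show ?thesis .
  qed
  show ?thesis unfolding a b e3 c' by (simp add: L_def algebra_simps)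
qed

lemma wedge_d_right:
  fixes I :: "'n::{finite,linorder} set"
  assumes f: "bounded_bilinear f" and hu: "homog (\<lambda>j. j = k) u"
  shows "(\<Sum>i\<in>I. sg i I *\<^sub>R wedge_with f u (V i) (I - {i})) =
         (-1::real) ^ k *\<^sub>R wedge_with f u (\<lambda>K. \<Sum>i\<in>K. sg i K *\<^sub>R V i (K - {i})) I"
proof -
  have "(\<Sum>i\<in>I. sg i I *\<^sub>R wedge_with f u (V i) (I - {i})) =
        (\<Sum>i\<in>I. \<Sum>J\<in>Pow (I - {i}). (sg i I * perm_sign J (I - {i} - J)) *\<^sub>R f (u J) (V i (I - {i} - J)))"
    by (simp add: wedge_with_def scaleR_sum_right)
  also have "\<dots> = (\<Sum>J\<in>Pow I. \<Sum>i\<in>I - J. (sg i I * perm_sign J (I - {i} - J)) *\<^sub>R f (u J) (V i (I - {i} - J)))"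
    by (rule sum_pairs2)
  also have "\<dots> = (\<Sum>J\<in>Pow I. \<Sum>i\<in>I - J. ((-1) ^ k * (perm_sign J (I - J) * sg i (I - J))) *\<^sub>R f (u J) (V i (I - J - {i})))"
  proof (intro sum.cong refl)
    fix J i assume J: "J \<in> Pow I" and i: "i \<in> I - J"
    then have e: "I - {i} - J = I - J - {i}" by auto
    show "(sg i I * perm_sign J (I - {i} - J)) *\<^sub>R f (u J) (V i (I - {i} - J)) =
       ((-1) ^ k * (perm_sign J (I - J) * sg i (I - J))) *\<^sub>R f (u J) (V i (I - J - {i}))"
    proof (cases "card J = k")
      case True
      then show ?thesis
        using sign_W2[of i I J] J i unfolding sg_ps by (simp add: e)
    next
      case False
      then have "u J = 0" using hu by (simp add: homog_def)
      then show ?thesis by (simp add: bounded_bilinear.zero_left[OF f])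
    qed
  qed
  also have "\<dots> = (-1::real) ^ k *\<^sub>R wedge_with f u (\<lambda>K. \<Sum>i\<in>K. sg i K *\<^sub>R V i (K - {i})) I"
    by (simp add: wedge_with_def bounded_bilinear.sum_right[OF f] bounded_bilinear.scaleR_right[OF f]
         scaleR_sum_right mult.assoc)
  finally show ?thesis .
qed

lemma self_neg_zero:
  fixes x :: "'a::real_vector" assumes "x = - x" shows "x = 0"
proof -
  have "x + x = 0" using assms by (metis add.right_inverse)
  then have "2 *\<^sub>R x = 0" by (simp add: scaleR_2)
  then show ?thesis by simp
qed

lemma dd_zero:
  fixes I :: "'n::{finite,linorder} set" and W :: "'n \<Rightarrow> 'n \<Rightarrow> 'n set \<Rightarrow> 'a::real_vector"
  assumes sym: "\<And>i j. W i j = W j i"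
  shows "(\<Sum>i\<in>I. sg i I *\<^sub>R (\<Sum>j\<in>I - {i}. sg j (I - {i}) *\<^sub>R W i j (I - {i} - {j}))) = 0"
proof -
  define g where "g i j = (sg i I * sg j (I - {i})) *\<^sub>R W i j (I - {i} - {j})" for i j
  have S: "(\<Sum>i\<in>I. sg i I *\<^sub>R (\<Sum>j\<in>I - {i}. sg j (I - {i}) *\<^sub>R W i j (I - {i} - {j}))) = (\<Sum>i\<in>I. \<Sum>j\<in>I - {i}. g i j)"
    by (simp add: g_def scaleR_sum_right)
  have "(\<Sum>i\<in>I. \<Sum>j\<in>I - {i}. g i j) = (\<Sum>i\<in>I. \<Sum>j\<in>I - {i}. g j i)"
    by (rule sum_ne_swap)
  also have "\<dots> = (\<Sum>i\<in>I. \<Sum>j\<in>I - {i}. - g i j)"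
  proof (intro sum.cong refl)
    fix i j assume "i \<in> I" "j \<in> I - {i}"
    then have e: "I - {j} - {i} = I - {i} - {j}" by auto
    show "g j i = - g i j"
    proof -
      have ij: "i \<noteq> j" "j \<in> I" using \<open>j \<in> I - {i}\<close> by auto
      have s: "perm_sign {i} (I - {i}) * perm_sign {j} (I - {i} - {j}) = - (perm_sign {j} (I - {j}) * perm_sign {i} (I - {i} - {j}))"
        using sg_remove[OF \<open>i \<in> I\<close> ij(2) ij(1)] by (simp add: e)
      show ?thesis unfolding g_def sg_ps e s sym[of i j] by simp
    qed
  qed
  also have "\<dots> = - (\<Sum>i\<in>I. \<Sum>j\<in>I - {i}. g i j)"
    by (simp add: sum_negf)
  finally have "(\<Sum>i\<in>I. \<Sum>j\<in>I - {i}. g i j) = 0" by (rule self_neg_zero)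
  then show ?thesis using S by simp
qed


type_synonym 'm mat = "complex^'m^'m"

lemma mm_add_left: "((a::'m::finite mat) + b) ** c = a ** c + b ** c"
  by (simp add: matrix_matrix_mult_def vec_eq_iff sum.distrib algebra_simps)
lemma mm_add_right: "(a::'m::finite mat) ** (b + c) = a ** b + a ** c"
  by (simp add: matrix_matrix_mult_def vec_eq_iff sum.distrib algebra_simps)
lemma mm_scaleR_left: "(r *\<^sub>R (a::'m::finite mat)) ** c = r *\<^sub>R (a ** c)"
  by (simp add: matrix_matrix_mult_def vec_eq_iff scaleR_sum_right vector_scaleR_component mult_scaleR_left mult_scaleR_right)
lemma mm_scaleR_right: "(a::'m::finite mat) ** (r *\<^sub>R c) = r *\<^sub>R (a ** c)"
  by (simp add: matrix_matrix_mult_def vec_eq_iff scaleR_sum_right vector_scaleR_component mult_scaleR_left mult_scaleR_right)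

lemma bb_mm: "bounded_bilinear ((**) :: 'm::finite mat \<Rightarrow> 'm mat \<Rightarrow> 'm mat)"
  unfolding bilinear_conv_bounded_bilinear[symmetric] bilinear_def
  by (auto intro!: linearI simp: mm_add_left mm_add_right mm_scaleR_left mm_scaleR_right)

lemma bb_lbr: "bounded_bilinear (lbr_mat :: 'm::finite mat \<Rightarrow> 'm mat \<Rightarrow> 'm mat)"
  unfolding bilinear_conv_bounded_bilinear[symmetric] bilinear_def lbr_mat_def
  by (auto intro!: linearI simp: mm_add_left mm_add_right mm_scaleR_left mm_scaleR_right algebra_simps)

lemma lbr_jacobi: "lbr_mat (a::'m::finite mat) (lbr_mat b c) = lbr_mat (lbr_mat a b) c + lbr_mat b (lbr_mat a c)"
  unfolding lbr_mat_def
  by (simp add: bounded_bilinear.diff_left[OF bb_mm] bounded_bilinear.diff_right[OF bb_mm] matrix_mul_assoc)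

lemma lbr_antisym: "lbr_mat (a::'m::finite mat) b = - lbr_mat b a"
  unfolding lbr_mat_def by simp

lemma madj_mult: "madj ((a::'m::finite mat) ** b) = madj b ** madj a"
  by (simp add: madj_def matrix_matrix_mult_def vec_eq_iff mult.commute)

lemma madj_madj [simp]: "madj (madj (a::'m::finite mat)) = a"
  by (simp add: madj_def vec_eq_iff)

lemma madj_one [simp]: "madj (mat 1 :: 'm::finite mat) = mat 1"
  by (simp add: madj_def vec_eq_iff mat_def)

lemma mtrace_comm: "mtrace ((a::'m::finite mat) ** b) = mtrace (b ** a)"
  unfolding mtrace_def matrix_matrix_mult_def
  by (simp, subst sum.swap, simp add: mult.commute)

lemma bl_madj: "bounded_linear (madj :: 'm::finite mat \<Rightarrow> 'm mat)"
  unfolding linear_conv_bounded_linear[symmetric]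
  by (rule linearI) (simp_all add: madj_def vec_eq_iff vector_scaleR_component complex_cnj_scaleR)

lemma ip_mat_inner: "ip_mat (a::'m::finite mat) b = inner a b"
  unfolding ip_mat_def mtrace_def matrix_matrix_mult_def madj_def inner_vec_def inner_complex_def
  by (simp, subst sum.swap, simp)

lemma ip_left_mult: "ip_mat (x::'m::finite mat) (p ** y) = ip_mat (madj p ** x) y"
  unfolding ip_mat_def by (simp add: madj_mult matrix_mul_assoc)

lemma ip_right_mult: "ip_mat (x::'m::finite mat) (y ** p) = ip_mat (x ** madj p) y"
proof -
  have "mtrace (madj x ** (y ** p)) = mtrace ((madj x ** y) ** p)"
    by (simp only: matrix_mul_assoc)
  also have "\<dots> = mtrace (p ** (madj x ** y))"
    by (rule mtrace_comm)
  also have "\<dots> = mtrace ((p ** madj x) ** y)"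
    by (simp only: matrix_mul_assoc)
  also have "p ** madj x = madj (x ** madj p)"
    by (simp only: madj_mult madj_madj)
  finally show ?thesis
    unfolding ip_mat_def by simp
qed

lemma ip_sym: "ip_mat (a::'m::finite mat) b = ip_mat b a"
  unfolding ip_mat_inner by (rule inner_commute)

lemma ip_neg_left: "ip_mat (- (a::'m::finite mat)) b = - ip_mat a b"
  unfolding ip_mat_inner by (rule inner_minus_left)

lemma skew_lbr_zero:
  assumes "madj p = - (p::'m::finite mat)"
  shows "ip_mat a (lbr_mat p a) = 0"
proof -
  have 1: "ip_mat a (p ** a) = 0"
  proof -
    have "ip_mat a (p ** a) = ip_mat (madj p ** a) a" by (rule ip_left_mult)
    also have "\<dots> = ip_mat (- (p ** a)) a"
      unfolding assms by (simp only: bounded_bilinear.minus_left[OF bb_mm])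
    also have "\<dots> = - ip_mat a (p ** a)"
      by (simp only: ip_neg_left ip_sym[of "p ** a" a])
    finally show ?thesis by simp
  qed
  have 2: "ip_mat a (a ** p) = 0"
  proof -
    have "ip_mat a (a ** p) = ip_mat (a ** madj p) a" by (rule ip_right_mult)
    also have "\<dots> = ip_mat (- (a ** p)) a"
      unfolding assms by (simp only: bounded_bilinear.minus_right[OF bb_mm])
    also have "\<dots> = - ip_mat a (a ** p)"
      by (simp only: ip_neg_left ip_sym[of "a ** p" a])
    finally show ?thesis by simp
  qed
  show ?thesis using 1 2 by (simp add: lbr_mat_def ip_mat_inner inner_diff_right)
qed

lemma lie_skew:
  assumes G: "compact_unitary_group G" and v: "v \<in> lie_algebra G"
  shows "madj v = - (v::'m::finite mat)"
proof -
  obtain \<gamma> where g0: "\<gamma> 0 = mat 1" and gG: "\<And>s. \<gamma> s \<in> G" and gd: "(\<gamma> has_vector_derivative v) (at 0)"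
    using v unfolding lie_algebra_def by blast
  have un: "madj (\<gamma> s) ** \<gamma> s = mat 1" for s
    using G gG[of s] unfolding compact_unitary_group_def unitary_mat_def by blast
  have d1: "((\<lambda>s. madj (\<gamma> s)) has_vector_derivative madj v) (at 0)"
    by (rule bounded_linear.has_vector_derivative[OF bl_madj gd])
  have d2: "((\<lambda>s. madj (\<gamma> s) ** \<gamma> s) has_vector_derivative (madj (\<gamma> 0) ** v + madj v ** \<gamma> 0)) (at 0)"
    by (rule bounded_bilinear.has_vector_derivative[OF bb_mm d1 gd])
  have d3: "((\<lambda>s. madj (\<gamma> s) ** \<gamma> s) has_vector_derivative 0) (at 0)"
    unfolding un by (rule has_vector_derivative_const)
  have "madj (\<gamma> 0) ** v + madj v ** \<gamma> 0 = 0"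
    using vector_derivative_unique_at[OF d2 d3] .
  then have "v + madj v = 0" by (simp add: g0)
  then show ?thesis by (simp add: eq_neg_iff_add_eq_0 add.commute)
qed


lemma W3a:
  fixes I :: "'n::{finite,linorder} set"
  assumes f: "bounded_bilinear f" and g: "bounded_bilinear g"
  shows "wedge_with f u (\<lambda>K. wedge_with g v w K) I =
    (\<Sum>J\<in>Pow I. \<Sum>K\<in>Pow (I - J). (perm_sign J K * perm_sign J (I - J - K) * perm_sign K (I - J - K)) *\<^sub>R
        f (u J) (g (v K) (w (I - J - K))))"
proof -
  have "wedge_with f u (\<lambda>K. wedge_with g v w K) I =
    (\<Sum>J\<in>Pow I. \<Sum>K\<in>Pow (I - J). (perm_sign J (I - J) * perm_sign K (I - J - K)) *\<^sub>R
        f (u J) (g (v K) (w (I - J - K))))"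
    by (simp add: wedge_with_def bounded_bilinear.sum_right[OF f] bounded_bilinear.scaleR_right[OF f] scaleR_sum_right)
  also have "\<dots> = (\<Sum>J\<in>Pow I. \<Sum>K\<in>Pow (I - J). (perm_sign J K * perm_sign J (I - J - K) * perm_sign K (I - J - K)) *\<^sub>R
        f (u J) (g (v K) (w (I - J - K))))"
  proof (intro sum.cong refl)
    fix J K assume "J \<in> Pow I" "K \<in> Pow (I - J)"
    then have e: "I - J = K \<union> (I - J - K)" by auto
    have "perm_sign J (I - J) = perm_sign J K * perm_sign J (I - J - K)"
      by (subst e) (rule ps_Un_right, auto)
    then show "(perm_sign J (I - J) * perm_sign K (I - J - K)) *\<^sub>R f (u J) (g (v K) (w (I - J - K))) =
      (perm_sign J K * perm_sign J (I - J - K) * perm_sign K (I - J - K)) *\<^sub>R f (u J) (g (v K) (w (I - J - K)))"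
      by simp
  qed
  finally show ?thesis .
qed

lemma W3b:
  fixes I :: "'n::{finite,linorder} set"
  assumes h: "bounded_bilinear h" and k: "bounded_bilinear k"
  shows "wedge_with h (\<lambda>M. wedge_with k u v M) w I =
    (\<Sum>J\<in>Pow I. \<Sum>K\<in>Pow (I - J). (perm_sign J K * perm_sign J (I - J - K) * perm_sign K (I - J - K)) *\<^sub>R
        h (k (u J) (v K)) (w (I - J - K)))"
proof -
  have "wedge_with h (\<lambda>M. wedge_with k u v M) w I =
     (\<Sum>M\<in>Pow I. \<Sum>J\<in>Pow M. (perm_sign M (I - M) * perm_sign J (M - J)) *\<^sub>R h (k (u J) (v (M - J))) (w (I - M)))"
    by (simp add: wedge_with_def bounded_bilinear.sum_left[OF h] bounded_bilinear.scaleR_left[OF h] scaleR_sum_right)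
  also have "\<dots> = (\<Sum>J\<in>Pow I. \<Sum>K\<in>Pow (I - J). (perm_sign (J \<union> K) (I - (J \<union> K)) * perm_sign J ((J \<union> K) - J)) *\<^sub>R
       h (k (u J) (v ((J \<union> K) - J))) (w (I - (J \<union> K))))"
    by (rule sum_pairs3)
  also have "\<dots> = (\<Sum>J\<in>Pow I. \<Sum>K\<in>Pow (I - J). (perm_sign J K * perm_sign J (I - J - K) * perm_sign K (I - J - K)) *\<^sub>R
        h (k (u J) (v K)) (w (I - J - K)))"
  proof (intro sum.cong refl)
    fix J K assume "J \<in> Pow I" "K \<in> Pow (I - J)"
    then have e1: "(J \<union> K) - J = K" and e2: "I - (J \<union> K) = I - J - K" by auto
    have "perm_sign (J \<union> K) (I - J - K) = perm_sign J (I - J - K) * perm_sign K (I - J - K)"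
      by (rule ps_Un_left) (use \<open>K \<in> Pow (I - J)\<close> in auto)
    then show "(perm_sign (J \<union> K) (I - (J \<union> K)) * perm_sign J ((J \<union> K) - J)) *\<^sub>R
       h (k (u J) (v ((J \<union> K) - J))) (w (I - (J \<union> K))) =
      (perm_sign J K * perm_sign J (I - J - K) * perm_sign K (I - J - K)) *\<^sub>R h (k (u J) (v K)) (w (I - J - K))"
      unfolding e1 e2 by (simp add: algebra_simps)
  qed
  finally show ?thesis .
qed

lemma jacobi_forms:
  fixes I :: "'n::{finite,linorder} set" and a h :: "'n set \<Rightarrow> 'm::finite mat"
  assumes ha: "homog (\<lambda>j. j = 1) a"
  shows "2 *\<^sub>R wedge_with lbr_mat a (\<lambda>K. wedge_with lbr_mat a h K) I =
         wedge_with lbr_mat (\<lambda>M. wedge_with lbr_mat a a M) h I"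
proof -
  define s where "s J K = perm_sign J K * perm_sign J (I - J - K) * perm_sign K (I - J - K)" for J K
  define X where "X = (\<Sum>J\<in>Pow I. \<Sum>K\<in>Pow (I - J). s J K *\<^sub>R lbr_mat (a J) (lbr_mat (a K) (h (I - J - K))))"
  define R where "R = (\<Sum>J\<in>Pow I. \<Sum>K\<in>Pow (I - J). s J K *\<^sub>R lbr_mat (lbr_mat (a J) (a K)) (h (I - J - K)))"
  define Y where "Y = (\<Sum>J\<in>Pow I. \<Sum>K\<in>Pow (I - J). s J K *\<^sub>R lbr_mat (a K) (lbr_mat (a J) (h (I - J - K))))"
  have LX: "wedge_with lbr_mat a (\<lambda>K. wedge_with lbr_mat a h K) I = X"
    unfolding X_def s_def by (rule W3a[OF bb_lbr bb_lbr])
  have RR: "wedge_with lbr_mat (\<lambda>M. wedge_with lbr_mat a a M) h I = R"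
    unfolding R_def s_def by (rule W3b[OF bb_lbr bb_lbr])
  have jac: "s J K *\<^sub>R lbr_mat (a J) (lbr_mat (a K) (h L)) =
      s J K *\<^sub>R lbr_mat (lbr_mat (a J) (a K)) (h L) + s J K *\<^sub>R lbr_mat (a K) (lbr_mat (a J) (h L))" for J K L
    by (subst lbr_jacobi) (simp only: scaleR_add_right)
  have "X = (\<Sum>J\<in>Pow I. \<Sum>K\<in>Pow (I - J). s J K *\<^sub>R lbr_mat (lbr_mat (a J) (a K)) (h (I - J - K)) +
       s J K *\<^sub>R lbr_mat (a K) (lbr_mat (a J) (h (I - J - K))))"
    unfolding X_def jac ..
  also have "\<dots> = R + Y"
    unfolding R_def Y_def by (simp only: sum.distrib)
  finally have XRY: "X = R + Y" .
  have "Y = (\<Sum>J\<in>Pow I. \<Sum>K\<in>Pow (I - J). s K J *\<^sub>R lbr_mat (a J) (lbr_mat (a K) (h (I - K - J))))"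
    unfolding Y_def by (rule sum_pairs_swap)
  also have "\<dots> = - X"
    unfolding X_def sum_negf[symmetric]
  proof (intro sum.cong refl)
    fix J K assume J: "J \<in> Pow I" and K: "K \<in> Pow (I - J)"
    have e: "I - K - J = I - J - K" by auto
    show "s K J *\<^sub>R lbr_mat (a J) (lbr_mat (a K) (h (I - K - J))) =
          - (s J K *\<^sub>R lbr_mat (a J) (lbr_mat (a K) (h (I - J - K))))"
    proof (cases "card J = 1 \<and> card K = 1")
      case True
      have "perm_sign J K * perm_sign K J = -1"
        using ps_swap[of J K] K True by auto
      then have "perm_sign K J = - perm_sign J K"
        by (metis ps_sq mult.assoc mult_minus1 mult.commute mult_1)
      then show ?thesis unfolding s_def e by (simp add: algebra_simps)
    next
      case False
      then have "a J = 0 \<or> a K = 0" using ha by (auto simp: homog_def)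
      then show ?thesis
        by (auto simp: bounded_bilinear.zero_left[OF bb_lbr] bounded_bilinear.zero_right[OF bb_lbr])
    qed
  qed
  finally have "Y = - X" .
  then have "2 *\<^sub>R X = R" using XRY by (simp add: scaleR_2 algebra_simps)
  then show ?thesis using LX RR by simp
qed

lemma wedge_0_left:
  fixes I :: "'n::{finite,linorder} set"
  assumes f: "bounded_bilinear f" and hu: "homog (\<lambda>j. j = 0) u"
  shows "wedge_with f u v I = f (u {}) (v I)"
proof -
  have "wedge_with f u v I = perm_sign {} (I - {}) *\<^sub>R f (u {}) (v (I - {})) +
      (\<Sum>J\<in>Pow I - {{}}. perm_sign J (I - J) *\<^sub>R f (u J) (v (I - J)))"
    unfolding wedge_with_def by (rule sum.remove) auto
  also have "(\<Sum>J\<in>Pow I - {{}}. perm_sign J (I - J) *\<^sub>R f (u J) (v (I - J))) = 0"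
  proof (rule sum.neutral, intro ballI)
    fix J assume "J \<in> Pow I - {{}}"
    then have "card J \<noteq> 0" by auto
    then have "u J = 0" using hu by (simp add: homog_def)
    then show "perm_sign J (I - J) *\<^sub>R f (u J) (v (I - J)) = 0" by (simp add: bounded_bilinear.zero_left[OF f])
  qed
  finally show ?thesis by simp
qed

lemma wedge_0_right:
  fixes I :: "'n::{finite,linorder} set"
  assumes f: "bounded_bilinear f" and hv: "homog (\<lambda>j. j = 0) v"
  shows "wedge_with f u v I = f (u I) (v {})"
proof -
  have "wedge_with f u v I = perm_sign I (I - I) *\<^sub>R f (u I) (v (I - I)) +
      (\<Sum>J\<in>Pow I - {I}. perm_sign J (I - J) *\<^sub>R f (u J) (v (I - J)))"
    unfolding wedge_with_def by (rule sum.remove) auto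
  also have "(\<Sum>J\<in>Pow I - {I}. perm_sign J (I - J) *\<^sub>R f (u J) (v (I - J))) = 0"
  proof (rule sum.neutral, intro ballI)
    fix J assume "J \<in> Pow I - {I}"
    then have "I - J \<noteq> {}" by auto
    then have "card (I - J) \<noteq> 0" by simp
    then have "v (I - J) = 0" using hv by (simp add: homog_def)
    then show "perm_sign J (I - J) *\<^sub>R f (u J) (v (I - J)) = 0" by (simp add: bounded_bilinear.zero_right[OF f])
  qed
  finally show ?thesis by simp
qed

lemma wedge_add_left:
  assumes f: "bounded_bilinear f"
  shows "wedge_with f (\<lambda>J. u J + u' J) v I = wedge_with f u v I + wedge_with f u' v I"
  by (simp add: wedge_with_def bounded_bilinear.add_left[OF f] scaleR_add_right sum.distrib)

lemma wedge_add_right: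
  assumes f: "bounded_bilinear f"
  shows "wedge_with f u (\<lambda>J. v J + v' J) I = wedge_with f u v I + wedge_with f u v' I"
  by (simp add: wedge_with_def bounded_bilinear.add_right[OF f] scaleR_add_right sum.distrib)

lemma wedge_scale_left:
  assumes f: "bounded_bilinear f"
  shows "wedge_with f (\<lambda>J. c *\<^sub>R u J) v I = c *\<^sub>R wedge_with f u v I"
  by (simp add: wedge_with_def bounded_bilinear.scaleR_left[OF f] scaleR_sum_right mult.commute)

lemma wedge_neg_left:
  assumes f: "bounded_bilinear f"
  shows "wedge_with f (\<lambda>J. - u J) v I = - wedge_with f u v I"
  by (simp add: wedge_with_def bounded_bilinear.minus_left[OF f] sum_negf)

lemma wedge_zero_left:
  assumes f: "bounded_bilinear f"
  shows "wedge_with f (\<lambda>J. 0) v I = 0"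
  by (simp add: wedge_with_def bounded_bilinear.zero_left[OF f])

lemma wedge_zero_right:
  assumes f: "bounded_bilinear f"
  shows "wedge_with f u (\<lambda>J. 0) I = 0"
  by (simp add: wedge_with_def bounded_bilinear.zero_right[OF f])

lemma lbr_expand:
  "lbr_mat (\<Sum>a\<in>A. f a *\<^sub>R a) (\<Sum>b\<in>B. g b *\<^sub>R (b::'m::finite mat)) = (\<Sum>a\<in>A. \<Sum>b\<in>B. (f a * g b) *\<^sub>R lbr_mat a b)"
  unfolding bounded_bilinear.sum_left[OF bb_lbr]
  by (simp add: bounded_bilinear.sum_right[OF bb_lbr] bounded_bilinear.scaleR_left[OF bb_lbr]
       bounded_bilinear.scaleR_right[OF bb_lbr] scaleR_sum_right mult.commute)

lemma sym_zero:
  fixes X :: "'n::{finite,linorder} set \<Rightarrow> 'm::finite mat"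
  assumes symc: "\<And>\<alpha> \<beta>. homog (\<lambda>j. j = k) \<alpha> \<Longrightarrow> homog (\<lambda>j. j = k) \<beta> \<Longrightarrow>
       wedge_with (*) \<alpha> (op_pt c x \<beta>) = wedge_with (*) \<beta> (op_pt c x \<alpha>)"
    and hX: "homog (\<lambda>j. j = k) X"
  shows "wedge_with lbr_mat X (\<lambda>K. \<Sum>I'\<in>UNIV. c x K I' *\<^sub>R X I') I = 0"
proof -
  define \<alpha> where "\<alpha> b J = X J \<bullet> b" for b J
  have hal: "homog (\<lambda>j. j = k) (\<alpha> b)" for b
    using hX by (simp add: homog_def \<alpha>_def)
  have X: "X J = (\<Sum>b\<in>Basis. \<alpha> b J *\<^sub>R b)" for J
    by (simp add: \<alpha>_def euclidean_representation)
  have Y: "(\<Sum>I'\<in>UNIV. c x K I' *\<^sub>R X I') = (\<Sum>b\<in>Basis. op_pt c x (\<alpha> b) K *\<^sub>R b)" for K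
  proof -
    have "(\<Sum>b\<in>Basis. op_pt c x (\<alpha> b) K *\<^sub>R b) = (\<Sum>b\<in>Basis. \<Sum>I'\<in>UNIV. c x K I' *\<^sub>R (\<alpha> b I' *\<^sub>R b))"
      by (simp add: op_pt_def scaleR_sum_left)
    also have "\<dots> = (\<Sum>I'\<in>UNIV. c x K I' *\<^sub>R X I')"
      by (subst sum.swap) (simp add: X scaleR_sum_right)
    finally show ?thesis by simp
  qed
  define C where "C a b = wedge_with (*) (\<alpha> a) (op_pt c x (\<alpha> b)) I" for a b
  have Csym: "C a b = C b a" for a b
    unfolding C_def using symc[OF hal hal] by metis
  have main: "wedge_with lbr_mat X (\<lambda>K. \<Sum>I'\<in>UNIV. c x K I' *\<^sub>R X I') I =
     (\<Sum>a\<in>Basis. \<Sum>b\<in>Basis. C a b *\<^sub>R lbr_mat a b)"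
  proof -
    have "wedge_with lbr_mat X (\<lambda>K. \<Sum>I'\<in>UNIV. c x K I' *\<^sub>R X I') I =
       (\<Sum>J\<in>Pow I. perm_sign J (I - J) *\<^sub>R lbr_mat (\<Sum>a\<in>Basis. \<alpha> a J *\<^sub>R a) (\<Sum>b\<in>Basis. op_pt c x (\<alpha> b) (I - J) *\<^sub>R b))"
      unfolding wedge_with_def Y by (simp only: X[symmetric])
    also have "\<dots> = (\<Sum>J\<in>Pow I. \<Sum>a\<in>Basis. \<Sum>b\<in>Basis. (perm_sign J (I - J) * (\<alpha> a J * op_pt c x (\<alpha> b) (I - J))) *\<^sub>R lbr_mat a b)"
      by (intro sum.cong refl) (simp add: lbr_expand scaleR_sum_right)
    also have "\<dots> = (\<Sum>a\<in>Basis. \<Sum>J\<in>Pow I. \<Sum>b\<in>Basis. (perm_sign J (I - J) * (\<alpha> a J * op_pt c x (\<alpha> b) (I - J))) *\<^sub>R lbr_mat a b)"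
      by (rule sum.swap)
    also have "\<dots> = (\<Sum>a\<in>Basis. \<Sum>b\<in>Basis. \<Sum>J\<in>Pow I. (perm_sign J (I - J) * (\<alpha> a J * op_pt c x (\<alpha> b) (I - J))) *\<^sub>R lbr_mat a b)"
      by (rule sum.cong[OF refl], rule sum.swap)
    also have "\<dots> = (\<Sum>a\<in>Basis. \<Sum>b\<in>Basis. C a b *\<^sub>R lbr_mat a b)"
      by (simp add: C_def wedge_with_def scaleR_sum_left)
    finally show ?thesis .
  qed
  define S where "S = (\<Sum>a\<in>Basis. \<Sum>b\<in>Basis. C a b *\<^sub>R lbr_mat a b)"
  have "S = (\<Sum>a\<in>Basis. \<Sum>b\<in>Basis. C b a *\<^sub>R lbr_mat b a)"
    unfolding S_def by (rule sum.swap)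
  also have "\<dots> = (\<Sum>a\<in>Basis. \<Sum>b\<in>Basis. - (C a b *\<^sub>R lbr_mat a b))"
  proof (rule sum.cong[OF refl], rule sum.cong[OF refl])
    fix a b
    show "C b a *\<^sub>R lbr_mat b a = - (C a b *\<^sub>R lbr_mat a b)"
      by (simp only: Csym[of b a] lbr_antisym[of b a] scaleR_minus_right)
  qed
  also have "\<dots> = - S"
    unfolding S_def by (simp only: sum_negf)
  finally have "S = 0" by (rule self_neg_zero)
  then show ?thesis using main S_def by simp
qed


definition jf :: "('n::finite, 'm::finite) field \<Rightarrow> 'n set \<Rightarrow> (real, 'n) vec \<times> real \<Rightarrow> 'm mat" where
  "jf u I p = u I (fst p) (snd p)"

definition sm :: "('n::finite, 'm::finite) field \<Rightarrow> bool" where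
  "sm u \<longleftrightarrow> (\<forall>I. smooth_fun (jf u I))"

definition dd :: "(real, 'n) vec \<times> real \<Rightarrow> ('n::finite, 'm::finite) field \<Rightarrow> ('n, 'm) field" where
  "dd v u = (\<lambda>I x t. frechet_derivative (jf u I) (at (x, t)) v)"

definition dx :: "('n::{finite,linorder}, 'm::finite) field \<Rightarrow> ('n, 'm) field" where
  "dx u = (\<lambda>I x t. \<Sum>i\<in>I. sg i I *\<^sub>R dd (axis i 1, 0) u (I - {i}) x t)"

definition hom :: "nat \<Rightarrow> ('n::finite, 'm::finite) field \<Rightarrow> bool" where
  "hom k u \<longleftrightarrow> (\<forall>x t. homog (\<lambda>j. j = k) (\<lambda>K. u K x t))"

lemma smooth_field_sm: "smooth_field u \<longleftrightarrow> sm u"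
proof -
  have "(\<lambda>(x, t). u I x t) = jf u I" for I by (auto simp: jf_def fun_eq_iff)
  then show ?thesis by (simp add: smooth_field_def sm_def)
qed

lemma jf_dd: "jf (dd v u) I = (\<lambda>p. frechet_derivative (jf u I) (at p) v)"
  by (simp add: jf_def dd_def fun_eq_iff)

lemma sm_Ck: "sm u \<Longrightarrow> Ck k (jf u I)"
  by (simp add: sm_def smooth_fun_def)

lemma sm_dd: assumes "sm u" shows "sm (dd v u)"
  unfolding sm_def smooth_fun_def jf_dd
proof (intro allI)
  fix I k
  from sm_Ck[OF assms, of "Suc k" I] show "Ck k (\<lambda>p. frechet_derivative (jf u I) (at p) v)" by (cases v) simp
qed

lemma sm_differentiable: "sm u \<Longrightarrow> jf u I differentiable at p"
  using sm_Ck[of u "Suc 0" I] unfolding Ck.simps(2) differentiable_on_def by blast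

lemma sm_has_derivative: "sm u \<Longrightarrow> (jf u I has_derivative frechet_derivative (jf u I) (at p)) (at p)"
  using sm_differentiable frechet_derivative_works by blast

lemma sm_cont: "sm u \<Longrightarrow> continuous_on UNIV (jf u I)"
  using sm_Ck[of u 0 I] by simp

lemma dd_eq: "(jf u I has_derivative F) (at (x, t)) \<Longrightarrow> dd v u I x t = F v"
  unfolding dd_def using frechet_derivative_at by metis

lemma pd_eq:
  assumes "sm u" shows "pd i (u I) x t = dd (axis i 1, 0) u I x t"
proof -
  have "((\<lambda>s. jf u I ((x, t) + s *\<^sub>R (axis i 1, 0))) has_vector_derivative
      frechet_derivative (jf u I) (at (x, t)) (axis i 1, 0)) (at 0 within UNIV)"
    by (rule line_deriv0[OF sm_differentiable[OF assms]])
  then have "((\<lambda>s. u I (x + s *\<^sub>R axis i 1) t) has_vector_derivative dd (axis i 1, 0) u I x t) (at 0)"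
    by (simp add: jf_def dd_def)
  then show ?thesis unfolding pd_def by (rule vector_derivative_at)
qed

lemma tderiv_eq:
  assumes "sm u" shows "tderiv u I x t = dd (0, 1) u I x t"
proof -
  have "((\<lambda>s. jf u I ((x, 0) + s *\<^sub>R (0, 1))) has_vector_derivative
      frechet_derivative (jf u I) (at ((x, 0) + t *\<^sub>R (0, 1))) (0, 1)) (at t within UNIV)"
    by (rule line_deriv[OF sm_differentiable[OF assms]])
  then have "((\<lambda>s. u I x s) has_vector_derivative dd (0, 1) u I x t) (at t)"
    by (simp add: jf_def dd_def)
  then show ?thesis unfolding tderiv_def by (rule vector_derivative_at)
qed

lemma tderiv_fun: "sm u \<Longrightarrow> tderiv u = dd (0, 1) u"
  by (simp add: fun_eq_iff tderiv_eq)

lemma dext_fun: "sm u \<Longrightarrow> dext u = dx u"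
  by (simp add: fun_eq_iff dext_def dx_def pd_eq)

lemma dd_comm: assumes "sm u" shows "dd v (dd w u) = dd w (dd v u)"
proof (intro ext)
  fix I x t
  have "dd v (dd w u) I x t = frechet_derivative (\<lambda>p. frechet_derivative (jf u I) (at p) w) (at (x,t)) v"
    by (simp only: dd_def[of v] jf_dd)
  also have "\<dots> = frechet_derivative (\<lambda>p. frechet_derivative (jf u I) (at p) v) (at (x,t)) w"
    by (rule schwarz[OF sm_Ck[OF assms]])
  also have "\<dots> = dd w (dd v u) I x t"
    by (simp only: dd_def[of w] jf_dd)
  finally show "dd v (dd w u) I x t = dd w (dd v u) I x t" .
qed

section \<open>Smoothness closure\<close>

lemma Ck_scale: "Ck k g \<Longrightarrow> Ck k (\<lambda>p. c *\<^sub>R g p)"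
  using Ck_bilinear[OF bounded_bilinear_scaleR Ck_const] by blast

lemma sm_add: "sm u \<Longrightarrow> sm w \<Longrightarrow> sm (\<lambda>I x t. u I x t + w I x t)"
  unfolding sm_def smooth_fun_def jf_def by (auto intro!: Ck_add)

lemma sm_scale: "sm u \<Longrightarrow> sm (\<lambda>I x t. c *\<^sub>R u I x t)"
  unfolding sm_def smooth_fun_def jf_def by (auto intro!: Ck_scale)

lemma sm_neg: "sm u \<Longrightarrow> sm (\<lambda>I x t. - u I x t)"
  using sm_scale[of u "-1"] by simp

lemma sm_diff: "sm u \<Longrightarrow> sm w \<Longrightarrow> sm (\<lambda>I x t. u I x t - w I x t)"
  using sm_add[of u "\<lambda>I x t. - w I x t"] sm_neg[of w] by simp

lemma sm_lbr: "sm u \<Longrightarrow> sm w \<Longrightarrow> sm (lbr u w)"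
  unfolding sm_def smooth_fun_def
proof (intro allI)
  fix I k assume u: "\<forall>I k. Ck k (jf u I)" and w: "\<forall>I k. Ck k (jf w I)"
  have "jf (lbr u w) I = (\<lambda>p. \<Sum>J\<in>Pow I. perm_sign J (I - J) *\<^sub>R lbr_mat (jf u J p) (jf w (I - J) p))"
    by (simp add: jf_def lbr_def wedge_with_def fun_eq_iff)
  moreover have "Ck k (\<lambda>p. \<Sum>J\<in>Pow I. perm_sign J (I - J) *\<^sub>R lbr_mat (jf u J p) (jf w (I - J) p))"
    by (intro Ck_sum Ck_scale Ck_bilinear[OF bb_lbr]) (use u w in auto)
  ultimately show "Ck k (jf (lbr u w) I)" by simp
qed

lemma sm_dx: "sm u \<Longrightarrow> sm (dx u)"
  unfolding sm_def smooth_fun_def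
proof (intro allI)
  fix I k assume u: "\<forall>I k. Ck k (jf u I)"
  then have u': "sm u" by (simp add: sm_def smooth_fun_def)
  have "jf (dx u) I = (\<lambda>p. \<Sum>i\<in>I. sg i I *\<^sub>R jf (dd (axis i 1, 0) u) (I - {i}) p)"
    by (simp add: jf_def dx_def fun_eq_iff)
  moreover have "Ck k (\<lambda>p. \<Sum>i\<in>I. sg i I *\<^sub>R jf (dd (axis i 1, 0) u) (I - {i}) p)"
    by (rule Ck_sum) (auto intro!: Ck_scale sm_Ck sm_dd u')
  ultimately show "Ck k (jf (dx u) I)" by simp
qed

lemma sm_op:
  assumes c: "\<And>J I. smooth_fun (\<lambda>x. c x J I)" and u: "sm u"
  shows "sm (op_field c u)"
  unfolding sm_def smooth_fun_def
proof (intro allI)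
  fix J k
  have "jf (op_field c u) J = (\<lambda>p. \<Sum>I\<in>UNIV. c (fst p) J I *\<^sub>R jf u I p)"
    by (simp add: jf_def op_field_def fun_eq_iff)
  moreover have "Ck k (\<lambda>p. \<Sum>I\<in>UNIV. c (fst p) J I *\<^sub>R jf u I p)"
  proof (intro Ck_sum Ck_bilinear[OF bounded_bilinear_scaleR] sm_Ck u)
    fix I show "Ck k (\<lambda>p::(real, 'a) vec \<times> real. c (fst p) J I)"
      using c[of J I] by (intro Ck_linear_comp[OF bounded_linear_fst]) (simp add: smooth_fun_def)
  qed simp
  ultimately show "Ck k (jf (op_field c u) J)" by simp
qed

section \<open>Derivative rules\<close>

lemma dd_add: "sm u \<Longrightarrow> sm w \<Longrightarrow> dd v (\<lambda>I x t. u I x t + w I x t) I x t = dd v u I x t + dd v w I x t"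
proof -
  assume u: "sm u" and w: "sm w"
  have "(jf (\<lambda>I x t. u I x t + w I x t) I has_derivative
      (\<lambda>h. frechet_derivative (jf u I) (at (x,t)) h + frechet_derivative (jf w I) (at (x,t)) h)) (at (x, t))"
    using has_derivative_add[OF sm_has_derivative[OF u] sm_has_derivative[OF w]]
    by (simp add: jf_def[abs_def])
  then show ?thesis by (simp add: dd_eq) (simp add: dd_def)
qed

lemma dd_scale: "sm u \<Longrightarrow> dd v (\<lambda>I x t. c *\<^sub>R u I x t) I x t = c *\<^sub>R dd v u I x t"
proof -
  assume u: "sm u"
  have "(jf (\<lambda>I x t. c *\<^sub>R u I x t) I has_derivative
      (\<lambda>h. c *\<^sub>R frechet_derivative (jf u I) (at (x,t)) h)) (at (x, t))"
    using has_derivative_scaleR_right[OF sm_has_derivative[OF u]]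
    by (simp add: jf_def[abs_def])
  then show ?thesis by (simp add: dd_eq) (simp add: dd_def)
qed

lemma dd_neg: "sm u \<Longrightarrow> dd v (\<lambda>I x t. - u I x t) I x t = - dd v u I x t"
  using dd_scale[of u v "-1"] by simp

lemma dd_diff: "sm u \<Longrightarrow> sm w \<Longrightarrow> dd v (\<lambda>I x t. u I x t - w I x t) I x t = dd v u I x t - dd v w I x t"
  using dd_add[of u "\<lambda>I x t. - w I x t" v I x t] sm_neg[of w] dd_neg[of w v I x t] by simp

lemma dd_lbr:
  assumes u: "sm u" and w: "sm w"
  shows "dd v (lbr u w) I x t = lbr (dd v u) w I x t + lbr u (dd v w) I x t"
proof -
  have e: "jf (lbr u w) I = (\<lambda>p. \<Sum>J\<in>Pow I. perm_sign J (I - J) *\<^sub>R lbr_mat (jf u J p) (jf w (I - J) p))"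
    by (simp add: jf_def lbr_def wedge_with_def fun_eq_iff)
  have "(jf (lbr u w) I has_derivative (\<lambda>h. \<Sum>J\<in>Pow I. perm_sign J (I - J) *\<^sub>R
      (lbr_mat (jf u J (x,t)) (frechet_derivative (jf w (I - J)) (at (x,t)) h) +
       lbr_mat (frechet_derivative (jf u J) (at (x,t)) h) (jf w (I - J) (x,t))))) (at (x, t))"
    unfolding e
    by (intro has_derivative_sum has_derivative_scaleR_right
         bounded_bilinear.FDERIV[OF bb_lbr] sm_has_derivative u w)
  then have "dd v (lbr u w) I x t = (\<Sum>J\<in>Pow I. perm_sign J (I - J) *\<^sub>R
      (lbr_mat (jf u J (x,t)) (frechet_derivative (jf w (I - J)) (at (x,t)) v) +
       lbr_mat (frechet_derivative (jf u J) (at (x,t)) v) (jf w (I - J) (x,t))))"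
    by (rule dd_eq)
  then show ?thesis
    by (simp add: lbr_def wedge_with_def dd_def jf_def scaleR_add_right sum.distrib)
qed

lemma dd_dx:
  assumes u: "sm u"
  shows "dd v (dx u) = dx (dd v u)"
proof (intro ext)
  fix I x t
  have e: "jf (dx u) I = (\<lambda>p. \<Sum>i\<in>I. sg i I *\<^sub>R jf (dd (axis i 1, 0) u) (I - {i}) p)"
    by (simp add: jf_def dx_def fun_eq_iff)
  have "(jf (dx u) I has_derivative (\<lambda>h. \<Sum>i\<in>I. sg i I *\<^sub>R
      frechet_derivative (jf (dd (axis i 1, 0) u) (I - {i})) (at (x,t)) h)) (at (x, t))"
    unfolding e
    by (intro has_derivative_sum has_derivative_scaleR_right sm_has_derivative sm_dd u)
  then have "dd v (dx u) I x t = (\<Sum>i\<in>I. sg i I *\<^sub>R dd v (dd (axis i 1, 0) u) (I - {i}) x t)"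
    by (simp add: dd_eq) (simp add: dd_def)
  also have "\<dots> = dx (dd v u) I x t"
    by (simp add: dx_def dd_comm[OF u, of v])
  finally show "dd v (dx u) I x t = dx (dd v u) I x t" .
qed

lemma dx_add: "sm u \<Longrightarrow> sm w \<Longrightarrow> dx (\<lambda>I x t. u I x t + w I x t) I x t = dx u I x t + dx w I x t"
  by (simp add: dx_def dd_add scaleR_add_right sum.distrib)

lemma dx_scale: "sm u \<Longrightarrow> dx (\<lambda>I x t. c *\<^sub>R u I x t) I x t = c *\<^sub>R dx u I x t"
  by (simp add: dx_def dd_scale scaleR_sum_right mult.commute)

lemma dx_dx: "sm u \<Longrightarrow> dx (dx u) I x t = 0"
proof -
  assume u: "sm u"
  have "dx (dx u) I x t = (\<Sum>i\<in>I. sg i I *\<^sub>R dx (dd (axis i 1, 0) u) (I - {i}) x t)"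
    by (simp add: dx_def[of "dx u"] dd_dx[OF u])
  also have "\<dots> = (\<Sum>i\<in>I. sg i I *\<^sub>R (\<Sum>j\<in>I - {i}. sg j (I - {i}) *\<^sub>R
       (\<lambda>i j K. dd (axis j 1, 0) (dd (axis i 1, 0) u) K x t) i j (I - {i} - {j})))"
    by (simp add: dx_def)
  also have "\<dots> = 0"
    by (rule dd_zero) (simp add: dd_comm[OF u])
  finally show ?thesis .
qed

lemma dx_lbr:
  assumes u: "sm u" and w: "sm w" and hu: "hom k u"
  shows "dx (lbr u w) I x t = wedge_with lbr_mat (\<lambda>K. dx u K x t) (\<lambda>K. w K x t) I +
     (-1::real) ^ k *\<^sub>R wedge_with lbr_mat (\<lambda>K. u K x t) (\<lambda>K. dx w K x t) I"
proof -
  have "dx (lbr u w) I x t = (\<Sum>i\<in>I. sg i I *\<^sub>R wedge_with lbr_mat (\<lambda>K. dd (axis i 1, 0) u K x t) (\<lambda>K. w K x t) (I - {i})) +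
      (\<Sum>i\<in>I. sg i I *\<^sub>R wedge_with lbr_mat (\<lambda>K. u K x t) (\<lambda>K. dd (axis i 1, 0) w K x t) (I - {i}))"
  proof -
    have "dx (lbr u w) I x t = (\<Sum>i\<in>I. sg i I *\<^sub>R (lbr (dd (axis i 1, 0) u) w (I - {i}) x t + lbr u (dd (axis i 1, 0) w) (I - {i}) x t))"
      by (simp only: dx_def dd_lbr[OF u w])
    then show ?thesis by (simp add: lbr_def scaleR_add_right sum.distrib)
  qed
  also have "\<dots> = wedge_with lbr_mat (\<lambda>K. dx u K x t) (\<lambda>K. w K x t) I +
     (-1::real) ^ k *\<^sub>R wedge_with lbr_mat (\<lambda>K. u K x t) (\<lambda>K. dx w K x t) I"
    unfolding wedge_d_left[OF bb_lbr] wedge_d_right[OF bb_lbr hu[unfolded hom_def, rule_format]]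
    by (simp add: dx_def)
  finally show ?thesis .
qed

section \<open>Homogeneity\<close>

lemma hom_dd: "hom k u \<Longrightarrow> hom k (dd v u)"
proof -
  assume h: "hom k u"
  have "jf u K = (\<lambda>p. 0)" if "card K \<noteq> k" for K
    using h that by (auto simp: hom_def homog_def jf_def fun_eq_iff)
  then show ?thesis by (simp add: hom_def homog_def dd_def)
qed

lemma hom_dx:
  fixes u :: "('n::{finite,linorder}, 'm::finite) field"
  assumes h: "hom k u" shows "hom (Suc k) (dx u)"
  unfolding hom_def homog_def dx_def
proof (intro allI impI sum.neutral ballI)
  fix x t and I :: "'n set" and i assume c: "card I \<noteq> Suc k" and i: "i \<in> I"
  have "card I > 0" using i by (auto simp: card_gt_0_iff)
  then have "card (I - {i}) \<noteq> k" using c i by (simp add: card_Diff_singleton)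
  then show "sg i I *\<^sub>R dd (axis i 1, 0) u (I - {i}) x t = 0"
    using hom_dd[OF h] by (simp add: hom_def homog_def)
qed

lemma hom_lbr:
  fixes u :: "('n::{finite,linorder}, 'm::finite) field"
  shows "hom k u \<Longrightarrow> hom l w \<Longrightarrow> hom (k + l) (lbr u w)"
  unfolding hom_def homog_def lbr_def wedge_with_def
proof (intro allI impI sum.neutral ballI)
  fix x t and I J :: "'n set" assume hu: "\<forall>x t I. card I \<noteq> k \<longrightarrow> u I x t = 0" and hw: "\<forall>x t I. card I \<noteq> l \<longrightarrow> w I x t = 0"
    and c: "card I \<noteq> k + l" and J: "J \<in> Pow I"
  have "card (I - J) = card I - card J" "card J \<le> card I"
    using J by (auto simp: card_Diff_subset card_mono)
  then have "card J \<noteq> k \<or> card (I - J) \<noteq> l"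
    using c by arith
  then show "perm_sign J (I - J) *\<^sub>R lbr_mat (u J x t) (w (I - J) x t) = 0"
    using hu hw by (auto simp: bounded_bilinear.zero_left[OF bb_lbr] bounded_bilinear.zero_right[OF bb_lbr])
qed


lemma hom_add: "hom k u \<Longrightarrow> hom k w \<Longrightarrow> hom k (\<lambda>I x t. u I x t + w I x t)"
  by (simp add: hom_def homog_def)
lemma hom_scale: "hom k u \<Longrightarrow> hom k (\<lambda>I x t. c *\<^sub>R u I x t)"
  by (simp add: hom_def homog_def)
lemma hom_neg: "hom k u \<Longrightarrow> hom k (\<lambda>I x t. - u I x t)"
  by (simp add: hom_def homog_def)

lemma tderiv_has:
  assumes "sm u" shows "((\<lambda>s. u I x s) has_vector_derivative dd (0, 1) u I x t) (at t)"
proof -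
  have "((\<lambda>s. jf u I ((x, 0) + s *\<^sub>R (0, 1))) has_vector_derivative
      frechet_derivative (jf u I) (at ((x, 0) + t *\<^sub>R (0, 1))) (0, 1)) (at t within UNIV)"
    by (rule line_deriv[OF sm_differentiable[OF assms]])
  then show ?thesis by (simp add: jf_def dd_def)
qed

lemma jacobi0:
  fixes I :: "'n::{finite,linorder} set" and p a d :: "'n set \<Rightarrow> 'm::finite mat"
  assumes hp: "homog (\<lambda>j. j = 0) p"
  shows "wedge_with lbr_mat a (\<lambda>K. wedge_with lbr_mat p d K) I =
    wedge_with lbr_mat (\<lambda>K. wedge_with lbr_mat a p K) d I + wedge_with lbr_mat p (\<lambda>K. wedge_with lbr_mat a d K) I"
proof -
  have 1: "wedge_with lbr_mat p d K = lbr_mat (p {}) (d K)" for K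
    by (rule wedge_0_left[OF bb_lbr hp])
  have 2: "wedge_with lbr_mat a p K = lbr_mat (a K) (p {})" for K
    by (rule wedge_0_right[OF bb_lbr hp])
  have 3: "wedge_with lbr_mat p (\<lambda>K. wedge_with lbr_mat a d K) I = lbr_mat (p {}) (wedge_with lbr_mat a d I)"
    by (rule wedge_0_left[OF bb_lbr hp])
  show ?thesis
    unfolding 1 2 3
    by (simp add: wedge_with_def lbr_jacobi[of "a _" "p {}"] bounded_bilinear.sum_right[OF bb_lbr]
        bounded_bilinear.scaleR_right[OF bb_lbr] scaleR_add_right sum.distrib)
qed

lemma dd_vanish:
  assumes Q: "sm Q" and op: "open \<Omega>" and z: "\<And>x K t. x \<in> closure \<Omega> \<Longrightarrow> Q K x t = 0"
    and x: "x \<in> closure \<Omega>"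
  shows "dd v Q K x t = 0"
proof -
  have cont: "continuous_on (closure \<Omega>) (\<lambda>y. dd v Q K y t)"
  proof -
    have "continuous_on UNIV (\<lambda>y. jf (dd v Q) K (y, t))"
      by (rule continuous_on_compose2[OF sm_cont[OF sm_dd[OF Q]]]) (auto intro!: continuous_intros)
    then show ?thesis by (simp add: jf_def) (erule continuous_on_subset, simp)
  qed
  have "dd v Q K y t = 0" if y: "y \<in> \<Omega>" for y
  proof -
    have "(jf Q K has_derivative (\<lambda>h. 0)) (at (y, t))"
    proof (rule has_derivative_transform_within_open[OF has_derivative_const[of 0]])
      show "open (\<Omega> \<times> UNIV)" using op by (simp add: open_Times)
      show "(y, t) \<in> \<Omega> \<times> UNIV" using y by simp
      show "0 = jf Q K p" if "p \<in> \<Omega> \<times> UNIV" for p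
        using that z[of "fst p" K "snd p"] closure_subset[of \<Omega>] by (auto simp: jf_def)
    qed
    then show ?thesis by (rule dd_eq)
  qed
  then show ?thesis
    using continuous_constant_on_closure[OF cont _ x] by blast
qed

lemma dx_vanish:
  assumes "sm Q" "open \<Omega>" "\<And>x K t. x \<in> closure \<Omega> \<Longrightarrow> Q K x t = 0" "x \<in> closure \<Omega>"
  shows "dx Q I x t = 0"
  unfolding dx_def using dd_vanish[OF assms] by simp

lemma ipw_hodge:
  fixes u :: "('n::{finite,linorder}, 'm::finite) field"
  shows "ipw u (hodge u) UNIV x t = (\<Sum>J\<in>UNIV. ip_mat (u J x t) (u J x t))"
proof -
  have "ipw u (hodge u) UNIV x t = (\<Sum>J\<in>Pow UNIV. (perm_sign J (UNIV - J) * perm_sign J (UNIV - J)) * ip_mat (u J x t) (u J x t))"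
    unfolding ipw_def wedge_with_def hodge_def
    by (simp add: ip_mat_inner Compl_eq_Diff_UNIV[symmetric] double_complement mult.assoc)
  also have "\<dots> = (\<Sum>J\<in>UNIV. ip_mat (u J x t) (u J x t))"
    by (simp add: ps_sq)
  finally show ?thesis .
qed

theorem proposition2p19:
  fixes \<Omega> :: "((real, 'n::{finite,linorder}) vec) set"
    and G :: "((complex, 'm::finite) vec^'m) set"
    and A \<phi> \<rho> :: "('n, 'm) field"
    and E B D H :: "('n, 'm) field"
    and eps mu_inv :: "(real, 'n) vec \<Rightarrow> 'n set \<Rightarrow> 'n set \<Rightarrow> real"
  assumes "bounded_lipschitz_domain \<Omega>"
    and "compact_unitary_group G"
    and "smooth_field A" and "\<And>x t. homog (\<lambda>k. k = 1) (\<lambda>I. A I x t)"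
    and "\<And>I x t. x \<in> closure \<Omega> \<Longrightarrow> A I x t \<in> lie_algebra G"
    and "smooth_field \<phi>" and "\<And>x t. homog (\<lambda>k. k = 0) (\<lambda>I. \<phi> I x t)"
    and "\<And>I x t. x \<in> closure \<Omega> \<Longrightarrow> \<phi> I x t \<in> lie_algebra G"
    and "sym_iso_field 1 (closure \<Omega>) eps"
    and "sym_iso_field 2 (closure \<Omega>) mu_inv"
    and "E = (\<lambda>I x t. - (tderiv A I x t + cov_d A \<phi> I x t))"
    and "B = curvature A"
    and "D = op_field eps E"
    and "H = op_field mu_inv B"
    and "\<And>I x t. x \<in> closure \<Omega> \<Longrightarrow> tderiv D I x t - lbr \<phi> D I x t = cov_d A H I x t"
    and "\<And>I x t. x \<in> closure \<Omega> \<Longrightarrow> cov_d A D I x t = \<rho> I x t"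
  shows "(\<forall>x\<in>closure \<Omega>. \<forall>I t. tderiv \<rho> I x t = lbr \<phi> \<rho> I x t) \<and>
         (\<forall>x\<in>closure \<Omega>. \<forall>s t. fnorm \<rho> x s = fnorm \<rho> x t)"
proof -
  have opn: "open \<Omega>" using assms(1) by (simp add: bounded_lipschitz_domain_def)
  have smA: "sm A" using assms(3) by (simp add: smooth_field_sm)
  have homA: "hom 1 A" using assms(4) by (simp add: hom_def)
  have smP: "sm \<phi>" using assms(6) by (simp add: smooth_field_sm)
  have homP: "hom 0 \<phi>" using assms(7) by (simp add: hom_def)
  have homPp: "homog (\<lambda>j. j = 0) (\<lambda>K. \<phi> K x t)" for x t using assms(7) .
  have homAp: "homog (\<lambda>j. j = 1) (\<lambda>K. A K x t)" for x t using assms(4) .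
  have skew: "madj (\<phi> {} x t) = - \<phi> {} x t" if "x \<in> closure \<Omega>" for x t
    by (rule lie_skew[OF assms(2) assms(8)[OF that]])
  have eps_sm: "\<And>J I. smooth_fun (\<lambda>x. eps x J I)"
    and eps_sym: "\<And>x \<alpha> \<beta>. x \<in> closure \<Omega> \<Longrightarrow> homog (\<lambda>j. j = 1) \<alpha> \<Longrightarrow> homog (\<lambda>j. j = 1) \<beta> \<Longrightarrow>
         wedge_with (*) \<alpha> (op_pt eps x \<beta>) = wedge_with (*) \<beta> (op_pt eps x \<alpha>)"
    using assms(9) unfolding sym_iso_field_def by blast+
  have mu_sm: "\<And>J I. smooth_fun (\<lambda>x. mu_inv x J I)"
    and mu_sym: "\<And>x \<alpha> \<beta>. x \<in> closure \<Omega> \<Longrightarrow> homog (\<lambda>j. j = 2) \<alpha> \<Longrightarrow> homog (\<lambda>j. j = 2) \<beta> \<Longrightarrow>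
         wedge_with (*) \<alpha> (op_pt mu_inv x \<beta>) = wedge_with (*) \<beta> (op_pt mu_inv x \<alpha>)"
    using assms(10) unfolding sym_iso_field_def by blast+
  define T where "T = ((0::(real, 'n) vec), (1::real))"
  have Edef: "E = (\<lambda>I x t. - (dd T A I x t + (dx \<phi> I x t + lbr A \<phi> I x t)))"
    using assms(11) by (simp add: tderiv_fun[OF smA] cov_d_def dext_fun[OF smP] T_def)
  have smE: "sm E" unfolding Edef by (intro sm_neg sm_add sm_dd sm_dx sm_lbr smA smP)
  have h1: "hom 1 (dx \<phi>)" using hom_dx[OF homP] by simp
  have h2: "hom 1 (lbr A \<phi>)" using hom_lbr[OF homA homP] by simp
  have homE: "hom 1 E" unfolding Edef by (intro hom_neg hom_add hom_dd homA h1 h2)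
  have Bdef: "B = (\<lambda>I x t. dx A I x t + (1/2) *\<^sub>R lbr A A I x t)"
    using assms(12) by (simp add: curvature_def dext_fun[OF smA])
  have smB: "sm B" unfolding Bdef by (intro sm_add sm_scale sm_dx sm_lbr smA)
  have h3: "hom 2 (dx A)" using hom_dx[OF homA] by (simp add: numeral_2_eq_2)
  have h4: "hom 2 (lbr A A)" using hom_lbr[OF homA homA] by (simp add: numeral_2_eq_2)
  have homB: "hom 2 B" unfolding Bdef by (intro hom_add hom_scale h3 h4)
  have smD: "sm D" unfolding assms(13) by (rule sm_op[OF eps_sm smE])
  have smH: "sm H" unfolding assms(14) by (rule sm_op[OF mu_sm smB])
  define R where "R = cov_d A D"
  have Rdef: "R = (\<lambda>I x t. dx D I x t + lbr A D I x t)"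
    by (simp add: R_def cov_d_def dext_fun[OF smD])
  have smR: "sm R" unfolding Rdef by (intro sm_add sm_dx sm_lbr smA smD)
  have covH: "cov_d A H = (\<lambda>I x t. dx H I x t + lbr A H I x t)"
    by (simp add: cov_d_def dext_fun[OF smH])
  define Q where "Q = (\<lambda>I x t. dd T D I x t - lbr \<phi> D I x t - (dx H I x t + lbr A H I x t))"
  have smQ: "sm Q" unfolding Q_def by (intro sm_diff sm_add sm_dd sm_dx sm_lbr smA smD smP smH)
  have Qz: "Q K x t = 0" if "x \<in> closure \<Omega>" for x K t
    using assms(15)[OF that, of K t] unfolding Q_def covH by (simp add: tderiv_eq[OF smD] T_def)
  have dTD: "dd T D = (\<lambda>I x t. Q I x t + (lbr \<phi> D I x t + (dx H I x t + lbr A H I x t)))"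
    by (simp add: Q_def fun_eq_iff)
  have key: "dd T R I x t = lbr \<phi> R I x t" if x: "x \<in> closure \<Omega>" for I x t
  proof -
    have s1: "dd T R I x t = dx (dd T D) I x t + (lbr (dd T A) D I x t + lbr A (dd T D) I x t)"
      unfolding Rdef dd_add[OF sm_dx[OF smD] sm_lbr[OF smA smD]] dd_dx[OF smD] dd_lbr[OF smA smD] ..
    have s2: "dx (dd T D) I x t = dx Q I x t + (dx (lbr \<phi> D) I x t + (dx (dx H) I x t + dx (lbr A H) I x t))"
    proof -
      have sm2: "sm (\<lambda>I x t. dx H I x t + lbr A H I x t)" by (intro sm_add sm_dx sm_lbr smH smA)
      have sm1: "sm (\<lambda>I x t. lbr \<phi> D I x t + (dx H I x t + lbr A H I x t))"
        using sm_add[OF sm_lbr[OF smP smD] sm2] .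
      show ?thesis
        unfolding dTD dx_add[OF smQ sm1] dx_add[OF sm_lbr[OF smP smD] sm2] dx_add[OF sm_dx[OF smH] sm_lbr[OF smA smH]] ..
    qed
    have s3: "lbr A (dd T D) I x t = lbr A Q I x t + (lbr A (lbr \<phi> D) I x t + (lbr A (dx H) I x t + lbr A (lbr A H) I x t))"
      unfolding dTD lbr_def[of A] by (simp add: wedge_add_right[OF bb_lbr])
    have z1: "dx Q I x t = 0" by (rule dx_vanish[OF smQ opn Qz x])
    have z2: "lbr A Q I x t = 0"
      unfolding lbr_def using Qz[OF x] by (simp add: wedge_zero_right[OF bb_lbr])
    have z3: "dx (dx H) I x t = 0" by (rule dx_dx[OF smH])
    have l1: "dx (lbr \<phi> D) I x t = lbr (dx \<phi>) D I x t + lbr \<phi> (dx D) I x t"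
      using dx_lbr[OF smP smD homP] by (simp add: lbr_def)
    have l2: "dx (lbr A H) I x t = lbr (dx A) H I x t - lbr A (dx H) I x t"
      using dx_lbr[OF smA smH homA] by (simp add: lbr_def)
    have j1: "lbr A (lbr \<phi> D) I x t = lbr (lbr A \<phi>) D I x t + lbr \<phi> (lbr A D) I x t"
      unfolding lbr_def by (rule jacobi0[OF homPp])
    have j2: "2 *\<^sub>R lbr A (lbr A H) I x t = lbr (lbr A A) H I x t"
      unfolding lbr_def by (rule jacobi_forms[OF homAp])
    have j2': "lbr A (lbr A H) I x t = (1/2) *\<^sub>R lbr (lbr A A) H I x t"
    proof -
      have "lbr A (lbr A H) I x t = (1/2) *\<^sub>R (2 *\<^sub>R lbr A (lbr A H) I x t)" by simp
      then show ?thesis by (simp only: j2)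
    qed
    have zB: "lbr B H I x t = 0"
      unfolding lbr_def assms(14) op_field_def
      by (rule sym_zero[where k=2, OF mu_sym[OF x]]) (use homB in \<open>auto simp: hom_def\<close>)
    have Bexp: "lbr B H I x t = lbr (dx A) H I x t + (1/2) *\<^sub>R lbr (lbr A A) H I x t"
      unfolding Bdef lbr_def by (simp add: wedge_add_left[OF bb_lbr] wedge_scale_left[OF bb_lbr])
    have zE: "lbr E D I x t = 0"
      unfolding lbr_def assms(13) op_field_def
      by (rule sym_zero[where k=1, OF eps_sym[OF x]]) (use homE in \<open>auto simp: hom_def\<close>)
    have Eexp: "lbr E D I x t = - (lbr (dd T A) D I x t + (lbr (dx \<phi>) D I x t + lbr (lbr A \<phi>) D I x t))"
      unfolding Edef lbr_def[of _ D] by (simp only: wedge_neg_left[OF bb_lbr] wedge_add_left[OF bb_lbr])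
    have Rexp: "lbr \<phi> R I x t = lbr \<phi> (dx D) I x t + lbr \<phi> (lbr A D) I x t"
      unfolding Rdef lbr_def[of \<phi>] by (simp add: wedge_add_right[OF bb_lbr])
    have "dd T R I x t = (lbr (dx \<phi>) D I x t + lbr \<phi> (dx D) I x t) + (lbr (dx A) H I x t - lbr A (dx H) I x t)
        + lbr (dd T A) D I x t + (lbr (lbr A \<phi>) D I x t + lbr \<phi> (lbr A D) I x t) + lbr A (dx H) I x t
        + (1/2) *\<^sub>R lbr (lbr A A) H I x t"
      unfolding s1 s2 s3 z1 z2 z3 l1 l2 j1 j2' by (simp add: algebra_simps)
    also have "\<dots> = lbr \<phi> R I x t - lbr E D I x t + lbr B H I x t"
      unfolding Rexp Eexp Bexp by (simp add: algebra_simps)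
    also have "\<dots> = lbr \<phi> R I x t" unfolding zE zB by simp
    finally show ?thesis .
  qed
  have rhoR: "\<rho> I x t = R I x t" if "x \<in> closure \<Omega>" for I x t
    using assms(16)[OF that] by (simp add: R_def)
  have part1: "tderiv \<rho> I x t = lbr \<phi> \<rho> I x t" if x: "x \<in> closure \<Omega>" for I x t
  proof -
    have "\<rho> I x = R I x" by (rule ext) (rule rhoR[OF x])
    then have "tderiv \<rho> I x t = tderiv R I x t"
      unfolding tderiv_def by simp
    also have "\<dots> = dd T R I x t" by (simp add: tderiv_eq[OF smR] T_def)
    also have "\<dots> = lbr \<phi> R I x t" by (rule key[OF x])
    also have "\<dots> = lbr \<phi> \<rho> I x t" unfolding lbr_def using rhoR[OF x] by simp
    finally show ?thesis .
  qed
  have part2: "fnorm \<rho> x s = fnorm \<rho> x t" if x: "x \<in> closure \<Omega>" for x s t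
  proof -
    define N where "N t = (\<Sum>J\<in>UNIV. ip_mat (R J x t) (R J x t))" for t
    have fN: "fnorm \<rho> x t = sqrt (N t)" for t
      unfolding fnorm_def N_def ipw_hodge using rhoR[OF x] by simp
    have dN: "(N has_real_derivative 0) (at t)" for t
    proof -
      have dJ: "((\<lambda>t. R J x t \<bullet> R J x t) has_vector_derivative 0) (at t)" for J
      proof -
        have d: "((\<lambda>t. R J x t) has_vector_derivative dd T R J x t) (at t)"
          unfolding T_def by (rule tderiv_has[OF smR])
        have e: "dd T R J x t = lbr_mat (\<phi> {} x t) (R J x t)"
          unfolding key[OF x] lbr_def by (rule wedge_0_left[OF bb_lbr homPp])
        have z: "R J x t \<bullet> lbr_mat (\<phi> {} x t) (R J x t) = 0"
          using skew_lbr_zero[OF skew[OF x]] by (simp add: ip_mat_inner)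
        have "((\<lambda>t. R J x t \<bullet> R J x t) has_vector_derivative
            (R J x t \<bullet> dd T R J x t + dd T R J x t \<bullet> R J x t)) (at t)"
          by (rule bounded_bilinear.has_vector_derivative[OF bounded_bilinear_inner d d])
        then show ?thesis using z by (simp add: e inner_commute)
      qed
      have dJ': "((\<lambda>t. ip_mat (R J x t) (R J x t)) has_real_derivative 0) (at t)" for J
        using dJ[of J] by (simp add: has_real_derivative_iff_has_vector_derivative ip_mat_inner)
      have "(N has_real_derivative (\<Sum>J\<in>(UNIV :: 'n set set). 0)) (at t)"
        unfolding N_def by (rule DERIV_sum) (rule dJ')
      then show ?thesis by simp
    qed
    have "N s = N t" by (rule DERIV_isconst_all) (use dN in blast)
    then show ?thesis by (simp add: fN)
  qed
  show ?thesis using part1 part2 by blast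
qed

end
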